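(* Let $\Gamma_1$ and $\Gamma_2$ be compact metric graphs with distinguished vertices $p_1\in\Gamma_1$, $p_2\in\Gamma_2$ such that $M^{\Gamma_1}_{p_1}=M^{\Gamma_2}_{p_2}$ ($\Gamma_1,\Gamma_2$ need not be isospectral). Let $\Gamma$ be a compact metric graph with two distinct vertices $a,b$. Let $G$ be obtained from $\Gamma$ by identifying $p_1$ with $a$ and $p_2$ with $b$, and let $G'$ be obtained from $\Gamma$ by identifying $p_2$ with $a$ and $p_1$ with $b$. Then $G$ and $G'$ are isospectral with standard vertex conditions.
   Context: Titchmarsh–Weil $M$-function: for a compact metric graph $\Gamma$ with a distinguished boundary vertex $v$ (all other vertices interior), and $k$ outside a discrete set, let $u$ satisfy $-u''=k^2u$ on each edge, be continuous at every vertex, satisfy the Kirchhoff condition (vanishing sum of outward normal derivatives) at every interior vertex, and have $u(v)\ne0$. Then $M^\Gamma_v(k)$ is defined by $M^\Gamma_v(k)u(v)=u'(v)$, where $u'(v)$ is the sum of outward normal derivatives of $u$ at $v$; equality of $M$-functions means equality as meromorphic functions of $k$. Standard (Neumann–Kirchhoff) vertex conditions: continuity and vanishing sum of outward normal derivatives at each vertex. Isospectral means same eigenvalues with multiplicities. *)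

theory Defs
  imports "HOL-Analysis.Analysis" "HOL-Library.Extended_Nat"
begin

text \<open>A finite metric graph: vertices, edges, each edge e identified with the
interval [0, elen e], running from etail e (at 0) to ehead e (at elen e).
Loops and multiple edges are allowed.\<close>

record ('v, 'e) mgraph =
  verts :: "'v set"
  edges :: "'e set"
  etail :: "'e \<Rightarrow> 'v"
  ehead :: "'e \<Rightarrow> 'v"
  elen  :: "'e \<Rightarrow> real"

definition compact_mgraph :: "('v, 'e) mgraph \<Rightarrow> bool" where
  "compact_mgraph G \<longleftrightarrow> finite (verts G) \<and> finite (edges G) \<and>
     (\<forall>e\<in>edges G. etail G e \<in> verts G \<and> ehead G e \<in> verts G \<and> 0 < elen G e)"

definition helmholtz :: "('v, 'e) mgraph \<Rightarrow> complex \<Rightarrow> ('e \<Rightarrow> real \<Rightarrow> complex)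
    \<Rightarrow> ('e \<Rightarrow> real \<Rightarrow> complex) \<Rightarrow> bool" where
  "helmholtz G z f D \<longleftrightarrow> (\<forall>e\<in>edges G. \<forall>x\<in>{0..elen G e}.
      (f e has_vector_derivative D e x) (at x within {0..elen G e}) \<and>
      (D e has_vector_derivative (- z * f e x)) (at x within {0..elen G e}))"

definition vertex_continuous :: "('v, 'e) mgraph \<Rightarrow> ('e \<Rightarrow> real \<Rightarrow> complex)
    \<Rightarrow> ('v \<Rightarrow> complex) \<Rightarrow> bool" where
  "vertex_continuous G f phi \<longleftrightarrow> (\<forall>e\<in>edges G.
      f e 0 = phi (etail G e) \<and> f e (elen G e) = phi (ehead G e))"

text \<open>Sum of outward normal derivatives at a vertex (loops contribute twice).\<close>
definition out_deriv :: "('v, 'e) mgraph \<Rightarrow> ('e \<Rightarrow> real \<Rightarrow> complex) \<Rightarrow> 'v \<Rightarrow> complex" where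
  "out_deriv G D v = (\<Sum>e\<in>{e\<in>edges G. etail G e = v}. D e 0)
                    - (\<Sum>e\<in>{e\<in>edges G. ehead G e = v}. D e (elen G e))"

text \<open>Eigenfunctions of the Laplacian with standard (Neumann-Kirchhoff) conditions
  for eigenvalue lam, normalised to vanish off the graph.\<close>
definition std_eigenfun :: "('v, 'e) mgraph \<Rightarrow> real \<Rightarrow> ('e \<Rightarrow> real \<Rightarrow> complex) \<Rightarrow> bool" where
  "std_eigenfun G lam f \<longleftrightarrow>
     (\<forall>e. e \<notin> edges G \<longrightarrow> (\<forall>x. f e x = 0)) \<and>
     (\<forall>e\<in>edges G. \<forall>x. x \<notin> {0..elen G e} \<longrightarrow> f e x = 0) \<and>
     (\<exists>phi D. helmholtz G (complex_of_real lam) f D \<and> vertex_continuous G f phi \<and>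
        (\<forall>v\<in>verts G. out_deriv G D v = 0))"

definition lin_indep_family :: "nat \<Rightarrow> (nat \<Rightarrow> 'e \<Rightarrow> real \<Rightarrow> complex) \<Rightarrow> bool" where
  "lin_indep_family n fs \<longleftrightarrow> (\<forall>c :: nat \<Rightarrow> complex.
      (\<forall>e x. (\<Sum>i<n. c i * fs i e x) = 0) \<longrightarrow> (\<forall>i<n. c i = 0))"

definition multiplicity_std :: "('v, 'e) mgraph \<Rightarrow> real \<Rightarrow> enat" where
  "multiplicity_std G lam = Sup {enat n | n. \<exists>fs. (\<forall>i<n. std_eigenfun G lam (fs i)) \<and>
                                                lin_indep_family n fs}"

definition isospectral_std :: "('v, 'e) mgraph \<Rightarrow> ('w, 'd) mgraph \<Rightarrow> bool" where
  "isospectral_std G H \<longleftrightarrow> (\<forall>lam. multiplicity_std G lam = multiplicity_std H lam)"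

definition M_value :: "('v, 'e) mgraph \<Rightarrow> 'v \<Rightarrow> complex \<Rightarrow> complex \<Rightarrow> bool" where
  "M_value G v k m \<longleftrightarrow> (\<exists>u phi D. helmholtz G (k\<^sup>2) u D \<and> vertex_continuous G u phi \<and>
       (\<forall>w\<in>verts G - {v}. out_deriv G D w = 0) \<and>
       phi v \<noteq> 0 \<and> out_deriv G D v = m * phi v)"

text \<open>Equality of M-functions as meromorphic functions: off a discrete set of k
  both M-functions are defined (single valued) and coincide.\<close>
definition same_M :: "('v, 'e) mgraph \<Rightarrow> 'v \<Rightarrow> ('w, 'd) mgraph \<Rightarrow> 'w \<Rightarrow> bool" where
  "same_M G1 p1 G2 p2 \<longleftrightarrow> (\<exists>S. S sparse_in UNIV \<and>
     (\<forall>k. k \<notin> S \<longrightarrow> (\<exists>m. (\<forall>m'. M_value G1 p1 k m' \<longleftrightarrow> m' = m) \<and>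
                          (\<forall>m'. M_value G2 p2 k m' \<longleftrightarrow> m' = m))))"

definition dunion :: "('v, 'e) mgraph \<Rightarrow> ('w, 'd) mgraph \<Rightarrow> ('v + 'w, 'e + 'd) mgraph" where
  "dunion G H = \<lparr> verts = Inl ` verts G \<union> Inr ` verts H,
                  edges = Inl ` edges G \<union> Inr ` edges H,
                  etail = case_sum (Inl \<circ> etail G) (Inr \<circ> etail H),
                  ehead = case_sum (Inl \<circ> ehead G) (Inr \<circ> ehead H),
                  elen = case_sum (elen G) (elen H) \<rparr>"

definition identify :: "('v, 'e) mgraph \<Rightarrow> 'v \<Rightarrow> 'v \<Rightarrow> ('v, 'e) mgraph" where
  "identify G x y = (let q = (\<lambda>z. if z = x then y else z) in
      \<lparr> verts = q ` verts G, edges = edges G,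
        etail = q \<circ> etail G, ehead = q \<circ> ehead G, elen = elen G \<rparr>)"

end

theory Submission
  imports Defs "HOL-Real_Asymp.Real_Asymp"
begin

definition cc :: "complex \<Rightarrow> real \<Rightarrow> complex" where "cc k x = cos (k * of_real x)"
definition ss :: "complex \<Rightarrow> real \<Rightarrow> complex" where
  "ss k x = (if k = 0 then of_real x else sin (k * of_real x) / k)"

lemma cc_deriv: "((cc k) has_vector_derivative (- (k^2) * ss k x)) (at x within S)"
proof -
  have "((\<lambda>w. cos (k * w)) has_field_derivative (- sin (k * of_real x) * k)) (at (of_real x))"
    by (auto intro!: derivative_eq_intros)
  from has_vector_derivative_real_field[OF this] show ?thesis
    unfolding cc_def ss_def by (cases "k = 0") (auto simp: power2_eq_square field_simps)
qed

lemma ss_deriv: "((ss k) has_vector_derivative (cc k x)) (at x within S)"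
proof (cases "k = 0")
  case True
  have "((\<lambda>x. of_real x :: complex) has_vector_derivative 1) (at x within S)"
    by (auto intro!: derivative_eq_intros)
  then show ?thesis using True unfolding ss_def cc_def by simp
next
  case False
  have "((\<lambda>w. sin (k * w) / k) has_field_derivative (cos (k * of_real x) * k / k)) (at (of_real x))"
    by (auto intro!: derivative_eq_intros)
  from has_vector_derivative_real_field[OF this] show ?thesis
    using False unfolding cc_def ss_def by simp
qed

lemma cc0[simp]: "cc k 0 = 1" and ss0[simp]: "ss k 0 = 0"
  by (auto simp: cc_def ss_def)

lemma cc_ss_id: "cc k x ^2 + k^2 * ss k x ^ 2 = 1"
proof (cases "k = 0")
  case True then show ?thesis by (simp add: cc_def ss_def)
next
  case False
  then show ?thesis unfolding cc_def ss_def
    using sin_cos_squared_add[of "k * of_real x"] by (simp add: power_divide field_simps)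
qed

lemma ode_unique:
  fixes f D :: "real \<Rightarrow> complex"
  assumes hf: "\<And>x. x\<in>{0..L} \<Longrightarrow> (f has_vector_derivative D x) (at x within {0..L}) \<and>
            (D has_vector_derivative (- (k^2) * f x)) (at x within {0..L})"
    and x: "x \<in> {0..L}"
  shows "f x = f 0 * cc k x + D 0 * ss k x \<and> D x = D 0 * cc k x - k^2 * f 0 * ss k x"
proof -
  define d where "d y = f y - (f 0 * cc k y + D 0 * ss k y)" for y
  define d' where "d' y = D y - (D 0 * cc k y - k^2 * f 0 * ss k y)" for y
  have dd: "(d has_vector_derivative d' y) (at y within {0..L})" if "y \<in> {0..L}" for y
    unfolding d_def d'_def using hf[OF that]
    by (auto intro!: derivative_eq_intros cc_deriv ss_deriv simp: algebra_simps)
  have dd': "(d' has_vector_derivative (- (k^2) * d y)) (at y within {0..L})" if "y \<in> {0..L}" for y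
    unfolding d_def d'_def using hf[OF that]
    by (auto intro!: derivative_eq_intros cc_deriv ss_deriv simp: algebra_simps)
  define Wc where "Wc y = d y * cc k y - d' y * ss k y" for y
  define Ws where "Ws y = - (k^2) * d y * ss k y - d' y * cc k y" for y
  have "(Wc has_vector_derivative 0) (at y within {0..L})" if "y \<in> {0..L}" for y
  proof -
    have "(Wc has_vector_derivative (d y * (- (k^2) * ss k y) + d' y * cc k y
           - (d' y * cc k y + (- (k^2) * d y) * ss k y))) (at y within {0..L})"
      unfolding Wc_def by (auto intro!: derivative_eq_intros cc_deriv ss_deriv dd dd' that)
    then show ?thesis by (simp add: algebra_simps)
  qed
  then obtain c1 where c1: "\<And>y. y \<in> {0..L} \<Longrightarrow> Wc y = c1"
    by (metis convex_real_interval(5) has_vector_derivative_zero_constant)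
  have "(Ws has_vector_derivative 0) (at y within {0..L})" if "y \<in> {0..L}" for y
  proof -
    have "(Ws has_vector_derivative (- (k^2) * d y * cc k y + (- (k^2) * d' y) * ss k y
           - (d' y * (- (k^2) * ss k y) + (- (k^2) * d y) * cc k y))) (at y within {0..L})"
      unfolding Ws_def by (auto intro!: derivative_eq_intros cc_deriv ss_deriv dd dd' that)
    then show ?thesis by (simp add: algebra_simps)
  qed
  then obtain c2 where c2: "\<And>y. y \<in> {0..L} \<Longrightarrow> Ws y = c2"
    by (metis convex_real_interval(5) has_vector_derivative_zero_constant)
  have L0: "0 \<in> {0..L}" using x by auto
  have "Wc 0 = 0" "Ws 0 = 0" by (auto simp: Wc_def Ws_def d_def d'_def)
  then have W0: "Wc x = 0" "Ws x = 0" using c1[OF L0] c1[OF x] c2[OF L0] c2[OF x] by auto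
  have id: "cc k x ^2 + k^2 * ss k x ^ 2 = 1" by (rule cc_ss_id)
  have "d x = cc k x * Wc x - ss k x * Ws x"
  proof -
    have "cc k x * Wc x - ss k x * Ws x = d x * (cc k x ^2 + k^2 * ss k x ^ 2)"
      by (simp add: Wc_def Ws_def algebra_simps power2_eq_square)
    then show ?thesis using id by simp
  qed
  moreover have "d' x = - (k^2) * ss k x * Wc x - cc k x * Ws x"
  proof -
    have "- (k^2) * ss k x * Wc x - cc k x * Ws x = d' x * (cc k x ^2 + k^2 * ss k x ^ 2)"
      by (simp add: Wc_def Ws_def algebra_simps power2_eq_square)
    then show ?thesis using id by simp
  qed
  ultimately have "d x = 0" "d' x = 0" using W0 by auto
  then show ?thesis by (auto simp: d_def d'_def)
qed

definition sol :: "('v,'e) mgraph \<Rightarrow> 'v \<Rightarrow> complex \<Rightarrow> ('e \<Rightarrow> real \<Rightarrow> complex) \<Rightarrow> ('v \<Rightarrow> complex)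
   \<Rightarrow> ('e \<Rightarrow> real \<Rightarrow> complex) \<Rightarrow> bool" where
 "sol H p z f phi D \<longleftrightarrow> helmholtz H z f D \<and> vertex_continuous H f phi \<and>
    (\<forall>w\<in>verts H - {p}. out_deriv H D w = 0)"

lemma sum_by_vertex:
  fixes phi :: "'v \<Rightarrow> complex" and h :: "'e \<Rightarrow> complex"
  assumes "finite V" "finite E" "\<And>e. e \<in> E \<Longrightarrow> t e \<in> V"
  shows "(\<Sum>v\<in>V. phi v * (\<Sum>e\<in>{e\<in>E. t e = v}. h e)) = (\<Sum>e\<in>E. phi (t e) * h e)"
proof -
  have "(\<Sum>v\<in>V. phi v * (\<Sum>e\<in>{e\<in>E. t e = v}. h e)) = (\<Sum>v\<in>V. (\<Sum>e\<in>{e\<in>E. t e = v}. phi (t e) * h e))"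
  proof (rule sum.cong[OF refl])
    fix v show "phi v * (\<Sum>e\<in>{e\<in>E. t e = v}. h e) = (\<Sum>e\<in>{e\<in>E. t e = v}. phi (t e) * h e)"
      by (subst sum_distrib_left) (rule sum.cong, auto)
  qed
  also have "\<dots> = (\<Sum>e\<in>E. phi (t e) * h e)"
    using assms by (intro sum.group) auto
  finally show ?thesis .
qed

lemma vertex_pairing:
  assumes "compact_mgraph H"
  shows "(\<Sum>v\<in>verts H. phi v * out_deriv H E v) =
     (\<Sum>e\<in>edges H. phi (etail H e) * E e 0 - phi (ehead H e) * E e (elen H e))"
proof -
  have f: "finite (verts H)" "finite (edges H)" and th: "\<And>e. e \<in> edges H \<Longrightarrow> etail H e \<in> verts H \<and> ehead H e \<in> verts H"
    using assms by (auto simp: compact_mgraph_def)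
  have "(\<Sum>v\<in>verts H. phi v * out_deriv H E v) =
     (\<Sum>v\<in>verts H. phi v * (\<Sum>e\<in>{e\<in>edges H. etail H e = v}. E e 0))
     - (\<Sum>v\<in>verts H. phi v * (\<Sum>e\<in>{e\<in>edges H. ehead H e = v}. E e (elen H e)))"
    unfolding out_deriv_def by (simp add: right_diff_distrib sum_subtractf)
  also have "\<dots> = (\<Sum>e\<in>edges H. phi (etail H e) * E e 0) - (\<Sum>e\<in>edges H. phi (ehead H e) * E e (elen H e))"
    using f th by (subst sum_by_vertex, auto)+
  finally show ?thesis by (simp add: sum_subtractf)
qed

lemma green_edge:
  fixes f g D E :: "real \<Rightarrow> complex"
  assumes L: "0 \<le> L"
    and hf: "\<And>x. x\<in>{0..L} \<Longrightarrow> (f has_vector_derivative D x) (at x within {0..L}) \<and>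
            (D has_vector_derivative (- z * f x)) (at x within {0..L})"
    and hg: "\<And>x. x\<in>{0..L} \<Longrightarrow> (g has_vector_derivative E x) (at x within {0..L}) \<and>
            (E has_vector_derivative (- w * g x)) (at x within {0..L})"
  shows "(w - z) * integral {0..L} (\<lambda>x. f x * g x) = (D L * g L - f L * E L) - (D 0 * g 0 - f 0 * E 0)"
proof -
  have "((\<lambda>x. D x * g x - f x * E x) has_vector_derivative ((w - z) * (f x * g x))) (at x within {0..L})"
    if "x \<in> {0..L}" for x
  proof -
    have "((\<lambda>x. D x * g x - f x * E x) has_vector_derivative
       (D x * E x + (- z * f x) * g x - (f x * (- w * g x) + D x * E x))) (at x within {0..L})"
      using has_vector_derivative_mult[OF conjunct2[OF hf[OF that]] conjunct1[OF hg[OF that]]]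
        has_vector_derivative_mult[OF conjunct1[OF hf[OF that]] conjunct2[OF hg[OF that]]]
      by (intro has_vector_derivative_diff) auto
    then show ?thesis by (simp add: algebra_simps)
  qed
  from fundamental_theorem_of_calculus[OF L this]
  have "((\<lambda>x. (w - z) * (f x * g x)) has_integral ((D L * g L - f L * E L) - (D 0 * g 0 - f 0 * E 0))) {0..L}"
    by simp
  then have "integral {0..L} (\<lambda>x. (w - z) * (f x * g x)) = (D L * g L - f L * E L) - (D 0 * g 0 - f 0 * E 0)"
    by (rule integral_unique)
  then show ?thesis by (simp only: integral_mult_right)
qed

lemma green:
  assumes H: "compact_mgraph H" and p: "p \<in> verts H"
    and sf: "sol H p z f phi D" and sg: "sol H p w g psi E"
  shows "(w - z) * (\<Sum>e\<in>edges H. integral {0..elen H e} (\<lambda>x. f e x * g e x))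
       = phi p * out_deriv H E p - psi p * out_deriv H D p"
proof -
  have fin: "finite (verts H)" "finite (edges H)" and th: "\<And>e. e \<in> edges H \<Longrightarrow> 0 < elen H e"
    using H by (auto simp: compact_mgraph_def)
  have "(w - z) * (\<Sum>e\<in>edges H. integral {0..elen H e} (\<lambda>x. f e x * g e x))
     = (\<Sum>e\<in>edges H. (w - z) * integral {0..elen H e} (\<lambda>x. f e x * g e x))"
    by (simp add: sum_distrib_left)
  also have "\<dots> = (\<Sum>e\<in>edges H. (D e (elen H e) * g e (elen H e) - f e (elen H e) * E e (elen H e))
        - (D e 0 * g e 0 - f e 0 * E e 0))"
  proof (rule sum.cong[OF refl])
    fix e assume e: "e \<in> edges H"
    show "(w - z) * integral {0..elen H e} (\<lambda>x. f e x * g e x) = (D e (elen H e) * g e (elen H e) - f e (elen H e) * E e (elen H e))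
        - (D e 0 * g e 0 - f e 0 * E e 0)"
      apply (rule green_edge)
      using th[OF e] sf sg e by (auto simp: sol_def helmholtz_def)
  qed
  also have "\<dots> = (\<Sum>e\<in>edges H. phi (etail H e) * E e 0 - phi (ehead H e) * E e (elen H e))
          - (\<Sum>e\<in>edges H. psi (etail H e) * D e 0 - psi (ehead H e) * D e (elen H e))"
    using sf sg by (auto simp: sol_def vertex_continuous_def sum_subtractf[symmetric] algebra_simps intro!: sum.cong)
  also have "\<dots> = (\<Sum>v\<in>verts H. phi v * out_deriv H E v) - (\<Sum>v\<in>verts H. psi v * out_deriv H D v)"
    using vertex_pairing[OF H] by simp
  also have "\<dots> = phi p * out_deriv H E p - psi p * out_deriv H D p"
  proof -
    have a: "(\<Sum>v\<in>verts H. phi v * out_deriv H E v) = phi p * out_deriv H E p"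
      using sg p fin by (subst sum.remove[of _ p]) (auto simp: sol_def intro!: sum.neutral)
    have b: "(\<Sum>v\<in>verts H. psi v * out_deriv H D v) = psi p * out_deriv H D p"
      using sf p fin by (subst sum.remove[of _ p]) (auto simp: sol_def intro!: sum.neutral)
    show ?thesis using a b by simp
  qed
  finally show ?thesis .
qed

lemma sol_cnj:
  assumes "sol H p z f phi D"
  shows "sol H p (cnj z) (\<lambda>e x. cnj (f e x)) (\<lambda>v. cnj (phi v)) (\<lambda>e x. cnj (D e x))"
proof -
  have od: "out_deriv H (\<lambda>e x. cnj (D e x)) w = cnj (out_deriv H D w)" for w
    by (simp add: out_deriv_def)
  show ?thesis using assms
    unfolding sol_def helmholtz_def vertex_continuous_def od
    by (auto intro!: has_vector_derivative_cnj[THEN has_vector_derivative_eq_rhs])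
qed

lemma sol_add:
  assumes "sol H p z f phi D" "sol H p z g psi E"
  shows "sol H p z (\<lambda>e x. f e x + g e x) (\<lambda>v. phi v + psi v) (\<lambda>e x. D e x + E e x)"
proof -
  have od: "out_deriv H (\<lambda>e x. D e x + E e x) w = out_deriv H D w + out_deriv H E w" for w
    by (simp add: out_deriv_def sum.distrib)
  show ?thesis using assms
    unfolding sol_def helmholtz_def vertex_continuous_def od
    by (auto intro!: derivative_eq_intros simp: algebra_simps)
qed

lemma sol_scale:
  assumes "sol H p z f phi D"
  shows "sol H p z (\<lambda>e x. c * f e x) (\<lambda>v. c * phi v) (\<lambda>e x. c * D e x)"
proof -
  have od: "out_deriv H (\<lambda>e x. c * D e x) w = c * out_deriv H D w" for w
    by (simp add: out_deriv_def sum_distrib_left right_diff_distrib)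
  show ?thesis using assms
    unfolding sol_def helmholtz_def vertex_continuous_def od
    by (auto intro!: derivative_eq_intros simp: algebra_simps)
qed

lemma sol_zero: "sol H p z (\<lambda>e x. 0) (\<lambda>v. 0) (\<lambda>e x. 0)"
  by (simp add: sol_def helmholtz_def vertex_continuous_def out_deriv_def)

definition Ldata :: "('v,'e) mgraph \<Rightarrow> 'v \<Rightarrow> complex \<Rightarrow> (complex \<times> complex) set" where
  "Ldata H p z = {(x,y). \<exists>f phi D. sol H p z f phi D \<and> phi p = x \<and> out_deriv H D p = y}"

lemma Ldata_scale: "(x,y) \<in> Ldata H p z \<Longrightarrow> (c * x, c * y) \<in> Ldata H p z"
proof -
  assume "(x,y) \<in> Ldata H p z"
  then obtain f phi D where "sol H p z f phi D" "phi p = x" "out_deriv H D p = y"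
    by (auto simp: Ldata_def)
  moreover have "out_deriv H (\<lambda>e x. c * D e x) p = c * out_deriv H D p"
    by (simp add: out_deriv_def sum_distrib_left right_diff_distrib)
  ultimately show ?thesis unfolding Ldata_def using sol_scale[of H p z f phi D c] by auto
qed

lemma iso:
  assumes H: "compact_mgraph H" and p: "p \<in> verts H"
    and a: "(x1,y1) \<in> Ldata H p (of_real lam)" and b: "(x2,y2) \<in> Ldata H p (of_real lam)"
  shows "x1 * cnj y2 = cnj x2 * y1"
proof -
  obtain f phi D where f: "sol H p (of_real lam) f phi D" "phi p = x1" "out_deriv H D p = y1"
    using a by (auto simp: Ldata_def)
  obtain g psi E where g: "sol H p (of_real lam) g psi E" "psi p = x2" "out_deriv H E p = y2"
    using b by (auto simp: Ldata_def)
  have od: "out_deriv H (\<lambda>e x. cnj (E e x)) p = cnj (out_deriv H E p)"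
    by (simp add: out_deriv_def)
  from green[OF H p f(1) sol_cnj[OF g(1)]] show ?thesis
    using f g od by simp
qed

lemma line_lemma:
  fixes u1 u2 v1 v2 :: complex
  assumes u: "(u1,u2) \<noteq> (0,0)" and uu: "u1 * cnj u2 = cnj u1 * u2"
    and vu: "v1 * cnj u2 = cnj u1 * v2"
  shows "\<exists>c. v1 = c * u1 \<and> v2 = c * u2"
proof (cases "u1 = 0")
  case True
  then have "u2 \<noteq> 0" using u by auto
  then have "v1 = 0" using vu True by simp
  then show ?thesis using True \<open>u2 \<noteq> 0\<close> by (intro exI[of _ "v2/u2"]) simp
next
  case False
  then have cu: "cnj u1 \<noteq> 0" by simp
  have "v2 = v1 * cnj u2 / cnj u1" using vu cu by (simp add: field_simps)
  also have "cnj u2 / cnj u1 = u2 / u1" using uu False cu by (simp add: field_simps)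
  then have "v1 * cnj u2 / cnj u1 = v1 * (u2 / u1)" by (metis times_divide_eq_right)
  finally show ?thesis using False by (intro exI[of _ "v1/u1"]) simp
qed

lemma zero_from_green:
  assumes H: "compact_mgraph H" and hg: "helmholtz H z g E"
    and s: "(\<Sum>e\<in>edges H. integral {0..elen H e} (\<lambda>t. g e t * cnj (g e t))) = 0"
    and e: "e \<in> edges H" and t: "t \<in> {0..elen H e}"
  shows "g e t = 0"
proof -
  have fin: "finite (edges H)" and L: "\<And>e. e \<in> edges H \<Longrightarrow> 0 < elen H e"
    using H by (auto simp: compact_mgraph_def)
  have cont: "continuous_on {0..elen H e} (g e)" if "e \<in> edges H" for e
    using hg that by (auto simp: helmholtz_def intro!: continuous_on_vector_derivative)
  define I where "I e = integral {0..elen H e} (\<lambda>t. (cmod (g e t))^2)" for e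
  have hI: "((\<lambda>t. (cmod (g e t))^2) has_integral I e) {0..elen H e}" if "e \<in> edges H" for e
    unfolding I_def
    by (intro integrable_integral integrable_continuous_interval continuous_intros cont that)
  have "integral {0..elen H e} (\<lambda>t. g e t * cnj (g e t)) = of_real (I e)" if "e \<in> edges H" for e
  proof -
    have "((\<lambda>t. g e t * cnj (g e t)) has_integral of_real (I e)) {0..elen H e}"
    proof -
      have eq: "(\<lambda>t. g e t * cnj (g e t)) = (\<lambda>t. of_real ((cmod (g e t))^2))"
        by (rule ext, rule complex_norm_square[symmetric])
      show ?thesis unfolding eq by (rule has_integral_of_real[OF hI[OF that]])
    qed
    then show ?thesis by (rule integral_unique)
  qed
  then have "(\<Sum>e\<in>edges H. of_real (I e) :: complex) = 0" using s by simp
  then have "of_real (\<Sum>e\<in>edges H. I e) = (0::complex)" by (simp only: of_real_sum)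
  then have s0: "(\<Sum>e\<in>edges H. I e) = 0" by (simp only: of_real_eq_0_iff)
  have nn: "\<And>d. d\<in>edges H \<Longrightarrow> 0 \<le> I d"
    using hI by (metis has_integral_nonneg zero_le_power2)
  have "\<forall>d\<in>edges H. I d = 0" using sum_nonneg_eq_0_iff[of "edges H" I] fin nn s0 by blast
  then have "I e = 0" using e by blast
  then have "((\<lambda>t. (cmod (g e t))^2) has_integral 0) (cbox 0 (elen H e))" using hI[OF e] by simp
  moreover have "continuous_on (cbox 0 (elen H e)) (\<lambda>t. (cmod (g e t))^2)"
    unfolding cbox_interval using continuous_on_power[OF continuous_on_norm[OF cont[OF e]]] .
  moreover have "box 0 (elen H e) \<noteq> {}" using L[OF e] by simp
  moreover have "t \<in> cbox 0 (elen H e)" using t by simp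
  ultimately have "(cmod (g e t))^2 = 0"
    by (intro has_integral_0_cbox_imp_0[of 0 "elen H e" "\<lambda>t. (cmod (g e t))^2"]) auto
  then show ?thesis by simp
qed

definition sinc :: "complex \<Rightarrow> complex" where "sinc w = (if w = 0 then 1 else sin w / w)"

lemma isCont_sinc: "isCont sinc w"
proof (cases "w = 0")
  case True
  have "((\<lambda>h. (sin (0 + h) - sin 0) / h) \<longlongrightarrow> cos 0) (at (0::complex))"
    by (rule DERIV_D) (auto intro!: derivative_eq_intros)
  then have "((\<lambda>h. sin h / h) \<longlongrightarrow> 1) (at (0::complex))" by simp
  then have "(sinc \<longlongrightarrow> 1) (at 0)"
    by (rule tendsto_cong[THEN iffD1, rotated]) (auto simp: sinc_def eventually_at_filter)
  then show ?thesis using True by (simp add: isCont_def sinc_def)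
next
  case False
  have "isCont (\<lambda>w. sin w / w) w" using False by (auto intro!: continuous_intros)
  moreover have "\<forall>\<^sub>F x in nhds w. sin x / x = sinc x"
    using eventually_nhds_in_open[of "-{0}" w] False
    by (auto elim!: eventually_mono simp: sinc_def)
  ultimately show ?thesis using isCont_cong[of "\<lambda>x. sin x / x" sinc w] by blast
qed

lemma ss_sinc: "ss k t = of_real t * sinc (k * of_real t)"
  by (auto simp: ss_def sinc_def field_simps)

lemma continuous_on_sinc: "continuous_on S sinc"
  by (simp add: continuous_at_imp_continuous_on isCont_sinc)

lemma cont_ss: "continuous_on S (\<lambda>(k,t). ss k t)"
proof -
  have "continuous_on S (\<lambda>(k,t). of_real t * sinc (k * of_real t))"
    by (auto simp: case_prod_unfold intro!: continuous_intros continuous_on_compose2[OF continuous_on_sinc[of UNIV]])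
  then show ?thesis by (simp add: ss_sinc)
qed

lemma cont_cc: "continuous_on S (\<lambda>(k,t). cc k t)"
  unfolding cc_def by (auto simp: case_prod_unfold intro!: continuous_intros)

lemma tendsto_ss: "kk \<longlonglongrightarrow> k0 \<Longrightarrow> (\<lambda>n. ss (kk n) t) \<longlonglongrightarrow> ss k0 t"
  unfolding ss_sinc by (intro tendsto_intros isCont_tendsto_compose[OF isCont_sinc])

lemma tendsto_cc: "kk \<longlonglongrightarrow> k0 \<Longrightarrow> (\<lambda>n. cc (kk n) t) \<longlonglongrightarrow> cc k0 t"
  unfolding cc_def by (intro tendsto_intros)

lemma explicit_helm:
  "helmholtz H (k^2) (\<lambda>e t. a e * cc k t + b e * ss k t) (\<lambda>e t. b e * cc k t - k^2 * a e * ss k t)"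
  unfolding helmholtz_def
  by (auto intro!: derivative_eq_intros cc_deriv ss_deriv simp: algebra_simps)

lemma BW_finite:
  fixes X :: "nat \<Rightarrow> 'e \<Rightarrow> 'b::{heine_borel,real_normed_vector}"
  assumes "finite E" and "\<And>n e. e \<in> E \<Longrightarrow> norm (X n e) \<le> M"
  shows "\<exists>r l. strict_mono r \<and> (\<forall>e\<in>E. (\<lambda>n. X (r n) e) \<longlonglongrightarrow> l e)"
  using assms
proof (induction E arbitrary: X rule: finite_induct)
  case empty
  show ?case by (intro exI[of _ id]) (auto simp: strict_mono_def)
next
  case (insert e F)
  obtain r1 l1 where r1: "strict_mono r1" "\<forall>e\<in>F. (\<lambda>n. X (r1 n) e) \<longlonglongrightarrow> l1 e"
    using insert.IH[of X] insert.prems by auto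
  have "bounded (range (\<lambda>n. X (r1 n) e))"
    using insert.prems by (auto simp: bounded_iff)
  from bounded_imp_convergent_subsequence[OF this]
  obtain l r2 where r2: "strict_mono r2" "((\<lambda>n. X (r1 n) e) \<circ> r2) \<longlonglongrightarrow> l" by blast
  show ?case
  proof (intro exI[of _ "r1 \<circ> r2"] exI[of _ "l1(e := l)"] conjI ballI)
    show "strict_mono (r1 \<circ> r2)" using r1 r2 by (simp add: strict_mono_o)
    fix e' assume "e' \<in> insert e F"
    then show "(\<lambda>n. X ((r1 \<circ> r2) n) e') \<longlonglongrightarrow> (l1(e := l)) e'"
    proof
      assume "e' = e" then show ?thesis using r2 by (simp add: o_def)
    next
      assume e': "e' \<in> F"
      then have "e' \<noteq> e" using insert by auto
      have "((\<lambda>n. X (r1 n) e') \<circ> r2) \<longlonglongrightarrow> l1 e'"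
        using LIMSEQ_subseq_LIMSEQ[OF r1(2)[rule_format, OF e'] r2(1)] .
      then show ?thesis using \<open>e' \<noteq> e\<close> by (simp add: o_def)
    qed
  qed
qed

lemma sol_explicit:
  assumes "helmholtz H (k^2) f D" "e \<in> edges H" "t \<in> {0..elen H e}"
  shows "f e t = f e 0 * cc k t + D e 0 * ss k t \<and> D e t = D e 0 * cc k t - k^2 * f e 0 * ss k t"
  using assms by (intro ode_unique[where L="elen H e"]) (auto simp: helmholtz_def)

lemma cont_cc2[continuous_intros]:
  "continuous_on S f \<Longrightarrow> continuous_on S g \<Longrightarrow> continuous_on S (\<lambda>z. cc (f z) (g z))"
  using continuous_on_compose2[OF cont_cc[of UNIV] continuous_on_Pair[of S f g]] by auto

lemma cont_ss2[continuous_intros]: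
  "continuous_on S f \<Longrightarrow> continuous_on S g \<Longrightarrow> continuous_on S (\<lambda>z. ss (f z) (g z))"
  using continuous_on_compose2[OF cont_ss[of UNIV] continuous_on_Pair[of S f g]] by auto

lemma closure_sol:
  assumes H: "compact_mgraph H" and p: "p \<in> verts H"
    and kk: "kk \<longlonglongrightarrow> k0"
    and sg: "\<And>n. sol H p ((kk n)^2) (g n) (ph n) (DD n)"
    and ca: "\<And>e. e \<in> edges H \<Longrightarrow> (\<lambda>n. c n * g n e 0) \<longlonglongrightarrow> a e"
    and cb: "\<And>e. e \<in> edges H \<Longrightarrow> (\<lambda>n. c n * DD n e 0) \<longlonglongrightarrow> b e"
    and cx: "(\<lambda>n. c n * ph n p) \<longlonglongrightarrow> x"
    and cy: "(\<lambda>n. c n * out_deriv H (DD n) p) \<longlonglongrightarrow> y"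
  shows "\<exists>phi. sol H p (k0^2) (\<lambda>e t. a e * cc k0 t + b e * ss k0 t) phi
              (\<lambda>e t. b e * cc k0 t - k0^2 * a e * ss k0 t) \<and> phi p = x \<and>
           out_deriv H (\<lambda>e t. b e * cc k0 t - k0^2 * a e * ss k0 t) p = y"
proof -
  define h where "h e t = a e * cc k0 t + b e * ss k0 t" for e t
  define Dh where "Dh e t = b e * cc k0 t - k0^2 * a e * ss k0 t" for e t
  have L: "\<And>e. e \<in> edges H \<Longrightarrow> 0 < elen H e" using H by (auto simp: compact_mgraph_def)
  have ex: "g n e t = g n e 0 * cc (kk n) t + DD n e 0 * ss (kk n) t \<and>
            DD n e t = DD n e 0 * cc (kk n) t - (kk n)^2 * g n e 0 * ss (kk n) t"
    if "e \<in> edges H" "t \<in> {0..elen H e}" for n e t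
    using sol_explicit[of H "kk n" "g n" "DD n" e t] sg[of n] that by (auto simp: sol_def)
  have limg: "(\<lambda>n. c n * g n e t) \<longlonglongrightarrow> h e t" if "e \<in> edges H" "t \<in> {0..elen H e}" for e t
  proof -
    have "(\<lambda>n. (c n * g n e 0) * cc (kk n) t + (c n * DD n e 0) * ss (kk n) t) \<longlonglongrightarrow> h e t"
      unfolding h_def by (intro tendsto_intros ca cb tendsto_cc tendsto_ss kk that)
    moreover have "c n * g n e t = (c n * g n e 0) * cc (kk n) t + (c n * DD n e 0) * ss (kk n) t" for n
      using ex[OF that, of n] by (simp add: algebra_simps)
    ultimately show ?thesis by simp
  qed
  have limD: "(\<lambda>n. c n * DD n e t) \<longlonglongrightarrow> Dh e t" if "e \<in> edges H" "t \<in> {0..elen H e}" for e t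
  proof -
    have "(\<lambda>n. (c n * DD n e 0) * cc (kk n) t - (kk n)^2 * (c n * g n e 0) * ss (kk n) t) \<longlonglongrightarrow> Dh e t"
      unfolding Dh_def by (intro tendsto_intros ca cb tendsto_cc tendsto_ss kk that)
    moreover have "c n * DD n e t = (c n * DD n e 0) * cc (kk n) t - (kk n)^2 * (c n * g n e 0) * ss (kk n) t" for n
    proof -
      have eq: "DD n e t = DD n e 0 * cc (kk n) t - (kk n)^2 * g n e 0 * ss (kk n) t" using ex[OF that, of n] by blast
      show ?thesis by (subst eq) (simp add: algebra_simps)
    qed
    ultimately show ?thesis by simp
  qed
  define phi where "phi v = lim (\<lambda>n. c n * ph n v)" for v
  have cont: "vertex_continuous H h phi"
    unfolding vertex_continuous_def
  proof (intro ballI conjI)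
    fix e assume e: "e \<in> edges H"
    have "(\<lambda>n. c n * ph n (etail H e)) = (\<lambda>n. c n * g n e 0)"
      using sg e by (auto simp: sol_def vertex_continuous_def)
    then have "(\<lambda>n. c n * ph n (etail H e)) \<longlonglongrightarrow> h e 0" using limg[OF e] L[OF e] by simp
    then show "h e 0 = phi (etail H e)" unfolding phi_def by (simp add: limI)
    have "(\<lambda>n. c n * ph n (ehead H e)) = (\<lambda>n. c n * g n e (elen H e))"
      using sg e by (auto simp: sol_def vertex_continuous_def)
    then have "(\<lambda>n. c n * ph n (ehead H e)) \<longlonglongrightarrow> h e (elen H e)" using limg[OF e] L[OF e] by simp
    then show "h e (elen H e) = phi (ehead H e)" unfolding phi_def by (simp add: limI)
  qed
  have limout: "(\<lambda>n. c n * out_deriv H (DD n) w) \<longlonglongrightarrow> out_deriv H Dh w" for w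
  proof -
    have eq: "c n * out_deriv H (DD n) w = (\<Sum>e\<in>{e \<in> edges H. etail H e = w}. c n * DD n e 0) -
       (\<Sum>e\<in>{e \<in> edges H. ehead H e = w}. c n * DD n e (elen H e))" for n
      by (simp add: out_deriv_def sum_distrib_left right_diff_distrib)
    have "(\<lambda>n. (\<Sum>e\<in>{e \<in> edges H. etail H e = w}. c n * DD n e 0) -
       (\<Sum>e\<in>{e \<in> edges H. ehead H e = w}. c n * DD n e (elen H e))) \<longlonglongrightarrow> out_deriv H Dh w"
      unfolding out_deriv_def
      apply (intro tendsto_diff tendsto_sum)
      using limD L by (auto intro!: limD simp del: atLeastAtMost_iff) (auto intro: less_imp_le)
    then show ?thesis unfolding eq .
  qed
  have kir: "\<forall>w\<in>verts H - {p}. out_deriv H Dh w = 0"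
  proof
    fix w assume w: "w \<in> verts H - {p}"
    then have "(\<lambda>n. c n * out_deriv H (DD n) w) = (\<lambda>n. 0)" using sg by (auto simp: sol_def)
    then have "(\<lambda>n. 0) \<longlonglongrightarrow> out_deriv H Dh w" using limout[of w] by simp
    then show "out_deriv H Dh w = 0" using LIMSEQ_unique[OF tendsto_const] by metis
  qed
  have "sol H p (k0^2) h phi Dh"
    unfolding sol_def using cont kir explicit_helm[of H k0 a b] unfolding h_def Dh_def by auto
  moreover have "phi p = x" unfolding phi_def using cx by (simp add: limI)
  moreover have "out_deriv H Dh p = y" using limout[of p] cy LIMSEQ_unique by blast
  ultimately show ?thesis unfolding h_def Dh_def by blast
qed

lemma lim_lemma:
  assumes H: "compact_mgraph H" and p: "p \<in> verts H"
    and kk: "kk \<longlonglongrightarrow> k0" and kne: "\<And>n. (kk n)^2 \<noteq> k0^2" and real: "cnj (k0^2) = k0^2"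
    and sg: "\<And>n. sol H p ((kk n)^2) (g n) (ph n) (DD n)"
    and cx: "(\<lambda>n. ph n p) \<longlonglongrightarrow> x" and cy: "(\<lambda>n. out_deriv H (DD n) p) \<longlonglongrightarrow> y"
  shows "(x,y) \<in> Ldata H p (k0^2)"
proof -
  have fin: "finite (edges H)" and L: "\<And>e. e \<in> edges H \<Longrightarrow> 0 < elen H e"
    using H by (auto simp: compact_mgraph_def)
  define N where "N n = (\<Sum>e\<in>edges H. cmod (g n e 0) + cmod (DD n e 0))" for n
  have N0: "0 \<le> N n" for n unfolding N_def by (intro sum_nonneg) auto
  define c where "c n = complex_of_real (1 / (1 + N n))" for n
  have cmc: "cmod (c n) = 1 / (1 + N n)" for n unfolding c_def norm_of_real using N0[of n] by simp
  have cb: "cmod (c n) \<le> 1" for n using N0[of n] by (simp add: cmc)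
  have gN: "cmod (g n e 0) \<le> N n" "cmod (DD n e 0) \<le> N n" if "e \<in> edges H" for n e
  proof -
    have "cmod (g n e 0) + cmod (DD n e 0) \<le> N n"
      unfolding N_def using fin that by (intro member_le_sum) auto
    then show "cmod (g n e 0) \<le> N n" "cmod (DD n e 0) \<le> N n"
      using norm_ge_zero[of "g n e 0"] norm_ge_zero[of "DD n e 0"] by linarith+
  qed
  have cgb: "cmod (c n * g n e 0) \<le> 1" "cmod (c n * DD n e 0) \<le> 1" if "e \<in> edges H" for n e
  proof -
    have "N n / (1 + N n) \<le> 1" using N0[of n] by simp
    moreover have "cmod (c n * g n e 0) \<le> N n / (1 + N n)" "cmod (c n * DD n e 0) \<le> N n / (1 + N n)"
      using gN[OF that, of n] N0[of n] by (auto simp: norm_mult cmc divide_right_mono)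
    ultimately show "cmod (c n * g n e 0) \<le> 1" "cmod (c n * DD n e 0) \<le> 1" by linarith+
  qed
  have "bounded (range c)" using cb by (auto simp: bounded_iff)
  from bounded_imp_convergent_subsequence[OF this]
  obtain c0 r0 where r0: "strict_mono r0" "(c \<circ> r0) \<longlonglongrightarrow> c0" by blast
  define X where "X n e = (c (r0 n) * g (r0 n) e 0, c (r0 n) * DD (r0 n) e 0)" for n e
  have Xb: "norm (X n e) \<le> 2" if "e \<in> edges H" for n e
  proof -
    have "norm (X n e) \<le> cmod (c (r0 n) * g (r0 n) e 0) + cmod (c (r0 n) * DD (r0 n) e 0)"
      unfolding X_def by (rule norm_Pair_le)
    then show ?thesis using cgb[OF that, of "r0 n"] by linarith
  qed
  obtain r1 l where r1: "strict_mono r1" "\<forall>e\<in>edges H. (\<lambda>n. X (r1 n) e) \<longlonglongrightarrow> l e"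
    using BW_finite[of "edges H" X 2] fin Xb by blast
  define r where "r = r0 \<circ> r1"
  have r: "strict_mono r" unfolding r_def using r0 r1 by (simp add: strict_mono_o)
  define a where "a e = fst (l e)" for e
  define b where "b e = snd (l e)" for e
  have ca: "(\<lambda>n. c (r n) * g (r n) e 0) \<longlonglongrightarrow> a e" if "e \<in> edges H" for e
    using tendsto_fst[OF r1(2)[rule_format, OF that]] unfolding X_def r_def a_def by (simp add: o_def)
  have cbb: "(\<lambda>n. c (r n) * DD (r n) e 0) \<longlonglongrightarrow> b e" if "e \<in> edges H" for e
    using tendsto_snd[OF r1(2)[rule_format, OF that]] unfolding X_def r_def b_def by (simp add: o_def)
  have cc0: "(\<lambda>n. c (r n)) \<longlonglongrightarrow> c0"
    using LIMSEQ_subseq_LIMSEQ[OF r0(2) r1(1)] unfolding r_def by (simp add: o_def)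
  have cxr: "(\<lambda>n. c (r n) * ph (r n) p) \<longlonglongrightarrow> c0 * x"
    using tendsto_mult[OF cc0 LIMSEQ_subseq_LIMSEQ[OF cx r]] by (simp add: o_def)
  have cyr: "(\<lambda>n. c (r n) * out_deriv H (DD (r n)) p) \<longlonglongrightarrow> c0 * y"
    using tendsto_mult[OF cc0 LIMSEQ_subseq_LIMSEQ[OF cy r]] by (simp add: o_def)
  have kkr: "(\<lambda>n. kk (r n)) \<longlonglongrightarrow> k0" using LIMSEQ_subseq_LIMSEQ[OF kk r] by (simp add: o_def)
  define h where "h e t = a e * cc k0 t + b e * ss k0 t" for e t
  define Dh where "Dh e t = b e * cc k0 t - k0^2 * a e * ss k0 t" for e t
  obtain phi where hs: "sol H p (k0^2) h phi Dh" "phi p = c0 * x" "out_deriv H Dh p = c0 * y"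
    using closure_sol[OF H p kkr sg ca cbb cxr cyr] unfolding h_def Dh_def by blast
  show ?thesis
  proof (cases "c0 = 0")
    case False
    have "(c0 * x, c0 * y) \<in> Ldata H p (k0^2)" using hs unfolding Ldata_def by blast
    from Ldata_scale[OF this, of "1/c0"] show ?thesis using False by simp
  next
    case True
    have hc: "sol H p (k0^2) (\<lambda>e t. cnj (h e t)) (\<lambda>v. cnj (phi v)) (\<lambda>e t. cnj (Dh e t))"
      using sol_cnj[OF hs(1)] real by simp
    have "out_deriv H (\<lambda>e t. cnj (Dh e t)) p = cnj (out_deriv H Dh p)" by (simp add: out_deriv_def)
    then have odc: "out_deriv H (\<lambda>e t. cnj (Dh e t)) p = 0" using hs(3) True by simp
    define F where "F e q = integral {0..elen H e} (\<lambda>t. cnj (h e t) *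
        (fst q * cc (snd (snd q)) t + fst (snd q) * ss (snd (snd q)) t))" for e and q :: "complex \<times> complex \<times> complex"
    have Fn: "(\<Sum>e\<in>edges H. F e (c (r n) * g (r n) e 0, c (r n) * DD (r n) e 0, kk (r n))) = 0" for n
    proof -
      have gs: "sol H p ((kk (r n))^2) (\<lambda>e t. c (r n) * g (r n) e t) (\<lambda>v. c (r n) * ph (r n) v) (\<lambda>e t. c (r n) * DD (r n) e t)"
        by (rule sol_scale[OF sg])
      have gr: "((kk (r n))^2 - k0^2) * (\<Sum>e\<in>edges H. integral {0..elen H e} (\<lambda>t. cnj (h e t) * (c (r n) * g (r n) e t)))
         = cnj (phi p) * out_deriv H (\<lambda>e t. c (r n) * DD (r n) e t) p - c (r n) * ph (r n) p * out_deriv H (\<lambda>e t. cnj (Dh e t)) p"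
        using green[OF H p hc gs] by simp
      then have "(\<Sum>e\<in>edges H. integral {0..elen H e} (\<lambda>t. cnj (h e t) * (c (r n) * g (r n) e t))) = 0"
        using odc hs(2) True kne[of "r n"] by simp
      moreover have "integral {0..elen H e} (\<lambda>t. cnj (h e t) * (c (r n) * g (r n) e t))
          = F e (c (r n) * g (r n) e 0, c (r n) * DD (r n) e 0, kk (r n))" if "e \<in> edges H" for e
        unfolding F_def
      proof (rule integral_cong)
        fix t assume t: "t \<in> {0..elen H e}"
        have "g (r n) e t = g (r n) e 0 * cc (kk (r n)) t + DD (r n) e 0 * ss (kk (r n)) t"
          using sol_explicit[of H "kk (r n)" "g (r n)" "DD (r n)" e t] sg[of "r n"] that t by (auto simp: sol_def)
        then show "cnj (h e t) * (c (r n) * g (r n) e t) = cnj (h e t) * (fst (c (r n) * g (r n) e 0, c (r n) * DD (r n) e 0, kk (r n)) *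
             cc (snd (snd (c (r n) * g (r n) e 0, c (r n) * DD (r n) e 0, kk (r n)))) t +
             fst (snd (c (r n) * g (r n) e 0, c (r n) * DD (r n) e 0, kk (r n))) *
             ss (snd (snd (c (r n) * g (r n) e 0, c (r n) * DD (r n) e 0, kk (r n)))) t)"
          by (simp add: algebra_simps)
      qed
      ultimately show ?thesis by simp
    qed
    have Fc: "continuous_on UNIV (F e)" for e
    proof -
      have "continuous_on (UNIV \<times> cbox 0 (elen H e)) (\<lambda>(q, t). cnj (h e t) *
        (fst q * cc (snd (snd q)) t + fst (snd q) * ss (snd (snd q)) t))"
        unfolding h_def case_prod_unfold
        by (intro continuous_intros)
      from integral_continuous_on_param[OF this] show ?thesis unfolding F_def by simp
    qed
    have "(\<lambda>n. \<Sum>e\<in>edges H. F e (c (r n) * g (r n) e 0, c (r n) * DD (r n) e 0, kk (r n)))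
            \<longlonglongrightarrow> (\<Sum>e\<in>edges H. F e (a e, b e, k0))"
    proof (intro tendsto_sum)
      fix e assume e: "e \<in> edges H"
      have tq: "(\<lambda>n. (c (r n) * g (r n) e 0, c (r n) * DD (r n) e 0, kk (r n))) \<longlonglongrightarrow> (a e, b e, k0)"
        by (intro tendsto_Pair ca cbb kkr e)
      show "(\<lambda>n. F e (c (r n) * g (r n) e 0, c (r n) * DD (r n) e 0, kk (r n))) \<longlonglongrightarrow> F e (a e, b e, k0)"
        using continuous_on_tendsto_compose[OF Fc[of e] tq UNIV_I] by simp
    qed
    then have "(\<Sum>e\<in>edges H. F e (a e, b e, k0)) = 0" using Fn LIMSEQ_unique[OF _ tendsto_const] by simp
    moreover have "F e (a e, b e, k0) = integral {0..elen H e} (\<lambda>t. h e t * cnj (h e t))" for e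
      unfolding F_def h_def by (simp add: mult.commute)
    ultimately have sz: "(\<Sum>e\<in>edges H. integral {0..elen H e} (\<lambda>t. h e t * cnj (h e t))) = 0" by simp
    have hel: "helmholtz H (k0^2) h Dh" using hs(1) by (simp add: sol_def)
    have h0: "h e t = 0" if "e \<in> edges H" "t \<in> {0..elen H e}" for e t
      using zero_from_green[OF H hel sz that] .
    have ab0: "a e = 0 \<and> b e = 0" if e: "e \<in> edges H" for e
    proof
      show "a e = 0" using h0[OF e, of 0] L[OF e] by (simp add: h_def)
      have d1: "(h e has_vector_derivative Dh e 0) (at 0 within {0..elen H e})"
        using hel e L[OF e] by (auto simp: helmholtz_def)
      have d2: "((\<lambda>t. 0) has_vector_derivative Dh e 0) (at 0 within {0..elen H e})"
      proof (rule has_vector_derivative_transform_within[OF d1 zero_less_one])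
        show "0 \<in> {0..elen H e}" using L[OF e] by simp
        fix x' assume "x' \<in> {0..elen H e}"
        then show "h e x' = 0" by (rule h0[OF e])
      qed
      have L0: "0 < elen H e" "(0::real) \<in> cbox 0 (elen H e)" using L[OF e] by auto
      have "vector_derivative (\<lambda>t. 0::complex) (at 0 within cbox 0 (elen H e)) = Dh e 0"
        by (rule vector_derivative_within_cbox[OF L0]) (use d2 in \<open>simp only: cbox_interval\<close>)
      moreover have "vector_derivative (\<lambda>t. 0::complex) (at 0 within cbox 0 (elen H e)) = 0"
        by (rule vector_derivative_within_cbox[OF L0]) (rule has_vector_derivative_const)
      ultimately show "b e = 0" by (simp add: Dh_def)
    qed
    have S1: "(\<lambda>n. \<Sum>e\<in>edges H. cmod (c (r n) * g (r n) e 0) + cmod (c (r n) * DD (r n) e 0))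
        \<longlonglongrightarrow> (\<Sum>e\<in>edges H. cmod (a e) + cmod (b e))"
      by (intro tendsto_sum tendsto_add tendsto_norm ca cbb)
    have "(\<Sum>e\<in>edges H. cmod (a e) + cmod (b e)) = 0" using ab0 by simp
    moreover have "(\<Sum>e\<in>edges H. cmod (c m * g m e 0) + cmod (c m * DD m e 0)) = 1 - cmod (c m)" for m
    proof -
      have "(\<Sum>e\<in>edges H. cmod (c m * g m e 0) + cmod (c m * DD m e 0)) = cmod (c m) * N m"
        unfolding N_def by (simp add: norm_mult sum_distrib_left distrib_left)
      also have "\<dots> = 1 - cmod (c m)" using N0[of m] by (simp add: cmc field_simps)
      finally show ?thesis .
    qed
    moreover have "(\<lambda>n. 1 - cmod (c (r n))) \<longlonglongrightarrow> 1"
      using tendsto_diff[OF tendsto_const tendsto_norm[OF cc0]] True by simp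
    ultimately have "(\<lambda>n. 1 - cmod (c (r n))) \<longlonglongrightarrow> 0" "(\<lambda>n. 1 - cmod (c (r n))) \<longlonglongrightarrow> 1"
      using S1 by simp_all
    from LIMSEQ_unique[OF this] have False by simp
    then show ?thesis ..
  qed
qed

lemma approach:
  fixes k0 :: complex
  assumes "S sparse_in UNIV"
  shows "\<exists>kk. kk \<longlonglongrightarrow> k0 \<and> (\<forall>n. kk n \<notin> S \<and> (kk n)^2 \<noteq> k0^2)"
proof -
  obtain B where B: "open B" "k0 \<in> B" "\<forall>y\<in>B. y \<noteq> k0 \<longrightarrow> y \<notin> S"
    using sparse_in_not_in[OF assms, of k0] by blast
  obtain \<epsilon> where \<epsilon>: "\<epsilon> > 0" "ball k0 \<epsilon> \<subseteq> B" using B open_contains_ball by blast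
  define v where "v = (if k0 = 0 then 1 else k0)"
  have v0: "v \<noteq> 0" by (simp add: v_def)
  define \<delta> where "\<delta> n = \<epsilon> / (real n + 2) / (1 + cmod v)" for n
  have \<delta>pos: "\<delta> n > 0" for n
  proof -
    have a: "real n + 2 > 0" by simp
    have b: "1 + cmod v > 0" by (simp add: add_pos_nonneg)
    have "(real n + 2) * (1 + cmod v) > 0" using mult_pos_pos[OF a b] .
    then show ?thesis using \<epsilon> by (simp add: \<delta>_def)
  qed
  define kk where "kk n = k0 + of_real (\<delta> n) * v" for n
  have "\<delta> \<longlonglongrightarrow> 0"
  proof -
    have "(\<lambda>n. \<epsilon> / (1 + cmod v) * (1 / (real n + 2))) \<longlonglongrightarrow> \<epsilon> / (1 + cmod v) * 0"
      by (intro tendsto_intros) real_asymp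
    then show ?thesis unfolding \<delta>_def by (simp add: field_simps)
  qed
  then have "kk \<longlonglongrightarrow> k0" unfolding kk_def
    using tendsto_add[OF tendsto_const tendsto_mult[OF tendsto_of_real tendsto_const]]
    by (metis (no_types) add.right_neutral mult_zero_left of_real_0)
  moreover have "kk n \<notin> S \<and> (kk n)^2 \<noteq> k0^2" for n
  proof
    have ne: "kk n \<noteq> k0" using \<delta>pos[of n] v0 by (simp add: kk_def)
    have "cmod (kk n - k0) = \<delta> n * cmod v" using \<delta>pos[of n] by (simp add: kk_def norm_mult)
    also have "\<dots> < \<epsilon>"
    proof -
      have "\<delta> n * cmod v = (\<epsilon> / (real n + 2)) * (cmod v / (1 + cmod v))"
        unfolding \<delta>_def by simp
      also have "\<dots> \<le> (\<epsilon> / (real n + 2)) * 1"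
        using \<epsilon> by (intro mult_left_mono) (auto simp: divide_le_eq_1 add_pos_nonneg)
      finally have "\<delta> n * cmod v \<le> \<epsilon> / (real n + 2)" by simp
      also have "\<dots> \<le> \<epsilon> / 2" by (rule divide_left_mono) (use \<epsilon> in auto)
      also have "\<dots> < \<epsilon>" using \<epsilon> by simp
      finally show ?thesis .
    qed
    finally have "kk n \<in> B" using \<epsilon> by (auto simp: dist_norm norm_minus_commute)
    then show "kk n \<notin> S" using B ne by auto
    have ne2: "kk n \<noteq> - k0"
    proof (cases "k0 = 0")
      case True then show ?thesis using ne by simp
    next
      case False
      then have "kk n = (1 + of_real (\<delta> n)) * k0" by (simp add: kk_def v_def algebra_simps)
      moreover have "1 + of_real (\<delta> n) \<noteq> (-1 :: complex)"
      proof
        assume "1 + of_real (\<delta> n) = (-1 :: complex)"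
        from arg_cong[OF this, of Re] have "\<delta> n = -2" by simp
        then show False using \<delta>pos[of n] by simp
      qed
      ultimately show ?thesis using False
        by (metis minus_mult_left mult_cancel_right mult_minus1)
    qed
    show "(kk n)^2 \<noteq> k0^2"
    proof
      assume "(kk n)^2 = k0^2"
      then have "(kk n - k0) * (kk n + k0) = 0" by (simp add: algebra_simps power2_eq_square)
      then show False using ne ne2 by (auto simp: add_eq_0_iff)
    qed
  qed
  ultimately show ?thesis by blast
qed

lemma M_sol:
  assumes "M_value H p k m"
  shows "\<exists>g ph D. sol H p (k^2) g ph D \<and> ph p = 1 / (1 + of_real (cmod m)) \<and>
     out_deriv H D p = m / (1 + of_real (cmod m))"
proof -
  obtain u phi D where s: "sol H p (k^2) u phi D" and ph: "phi p \<noteq> 0" and o: "out_deriv H D p = m * phi p"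
    using assms unfolding M_value_def sol_def by blast
  define s where "s = 1 / (phi p * (1 + of_real (cmod m)))"
  have nz: "1 + complex_of_real (cmod m) \<noteq> 0"
    by (metis norm_ge_zero of_real_1 of_real_add of_real_eq_0_iff add_nonneg_eq_0_iff zero_le_one one_neq_zero)
  have q: "phi p / (phi p * (1 + of_real (cmod m))) = 1 / (1 + of_real (cmod m))" using ph by simp
  have "out_deriv H (\<lambda>e x. s * D e x) p = s * out_deriv H D p"
    by (simp add: out_deriv_def sum_distrib_left right_diff_distrib)
  also have "\<dots> = m * (phi p / (phi p * (1 + of_real (cmod m))))" using o by (simp add: s_def)
  also have "\<dots> = m / (1 + of_real (cmod m))" unfolding q by simp
  finally have C: "out_deriv H (\<lambda>e x. s * D e x) p = m / (1 + of_real (cmod m))" .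
  have B: "s * phi p = 1 / (1 + of_real (cmod m))" unfolding q[symmetric] by (simp add: s_def)
  show ?thesis using sol_scale[OF s, of s] B C by blast
qed

lemma choice3: "\<forall>n. \<exists>a b c. P n a b c \<Longrightarrow> \<exists>A B C. \<forall>n. P n (A n) (B n) (C n)"
proof -
  assume "\<forall>n. \<exists>a b c. P n a b c"
  then have "\<forall>n. \<exists>t. P n (fst t) (fst (snd t)) (snd (snd t))" by auto
  then obtain T where T: "\<forall>n. P n (fst (T n)) (fst (snd (T n))) (snd (snd (T n)))" by metis
  show ?thesis
    by (rule exI[of _ "\<lambda>n. fst (T n)"], rule exI[of _ "\<lambda>n. fst (snd (T n))"],
        rule exI[of _ "\<lambda>n. snd (snd (T n))"]) (use T in simp)
qed

lemma same_line:
  assumes H1: "compact_mgraph H1" and H2: "compact_mgraph H2"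
    and p1: "p1 \<in> verts H1" and p2: "p2 \<in> verts H2"
    and sm: "same_M H1 p1 H2 p2"
  shows "\<exists>u. u \<noteq> (0,0) \<and> u \<in> Ldata H1 p1 (of_real lam) \<and> u \<in> Ldata H2 p2 (of_real lam)"
proof -
  define k0 where "k0 = csqrt (of_real lam)"
  have k0sq: "k0^2 = of_real lam" by (simp add: k0_def)
  have real: "cnj (k0^2) = k0^2" by (simp add: k0sq)
  obtain S where S: "S sparse_in UNIV"
    and SM: "\<And>k. k \<notin> S \<Longrightarrow> \<exists>m. (\<forall>m'. M_value H1 p1 k m' \<longleftrightarrow> m' = m) \<and> (\<forall>m'. M_value H2 p2 k m' \<longleftrightarrow> m' = m)"
    using sm unfolding same_M_def by blast
  obtain kk where kk: "kk \<longlonglongrightarrow> k0" "\<And>n. kk n \<notin> S" "\<And>n. (kk n)^2 \<noteq> k0^2"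
    using approach[OF S, of k0] by blast
  have "\<forall>n. \<exists>m. M_value H1 p1 (kk n) m \<and> M_value H2 p2 (kk n) m"
    using SM kk(2) by blast
  then obtain M where M: "\<And>n. M_value H1 p1 (kk n) (M n)" "\<And>n. M_value H2 p2 (kk n) (M n)" by metis
  define U where "U n = (1 / (1 + of_real (cmod (M n))) :: complex, M n / (1 + of_real (cmod (M n)))) " for n
  have "\<forall>n. \<exists>g ph D. sol H1 p1 ((kk n)^2) g ph D \<and> ph p1 = fst (U n) \<and> out_deriv H1 D p1 = snd (U n)"
    using M_sol[OF M(1)] unfolding U_def by simp
  then obtain g1 ph1 D1 where s1: "\<And>n. sol H1 p1 ((kk n)^2) (g1 n) (ph1 n) (D1 n)"
    "\<And>n. ph1 n p1 = fst (U n)" "\<And>n. out_deriv H1 (D1 n) p1 = snd (U n)"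
    using choice3[of "\<lambda>n g ph D. sol H1 p1 ((kk n)^2) g ph D \<and> ph p1 = fst (U n) \<and> out_deriv H1 D p1 = snd (U n)"]
    by blast
  have "\<forall>n. \<exists>g ph D. sol H2 p2 ((kk n)^2) g ph D \<and> ph p2 = fst (U n) \<and> out_deriv H2 D p2 = snd (U n)"
    using M_sol[OF M(2)] unfolding U_def by simp
  then obtain g2 ph2 D2 where s2: "\<And>n. sol H2 p2 ((kk n)^2) (g2 n) (ph2 n) (D2 n)"
    "\<And>n. ph2 n p2 = fst (U n)" "\<And>n. out_deriv H2 (D2 n) p2 = snd (U n)"
    using choice3[of "\<lambda>n g ph D. sol H2 p2 ((kk n)^2) g ph D \<and> ph p2 = fst (U n) \<and> out_deriv H2 D p2 = snd (U n)"]
    by blast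
  have Un: "cmod (fst (U n)) + cmod (snd (U n)) = 1" for n
  proof -
    have pos: "1 + cmod (M n) > 0" by (simp add: add_pos_nonneg)
    have "1 + complex_of_real (cmod (M n)) = of_real (1 + cmod (M n))" by simp
    then have "cmod (1 + complex_of_real (cmod (M n))) = 1 + cmod (M n)" using pos by (simp only: norm_of_real abs_of_pos)
    then show ?thesis unfolding U_def using pos by (simp add: norm_divide field_simps)
  qed
  have "bounded (range U)"
  proof -
    have "norm (U n) \<le> 2" for n
      using norm_Pair_le[of "fst (U n)" "snd (U n)"] Un[of n] by simp
    then show ?thesis by (auto simp: bounded_iff)
  qed
  from bounded_imp_convergent_subsequence[OF this]
  obtain u r where r: "strict_mono r" "(U \<circ> r) \<longlonglongrightarrow> u" by blast
  have u1: "(\<lambda>n. fst (U (r n))) \<longlonglongrightarrow> fst u" using tendsto_fst[OF r(2)] by (simp add: o_def)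
  have u2: "(\<lambda>n. snd (U (r n))) \<longlonglongrightarrow> snd u" using tendsto_snd[OF r(2)] by (simp add: o_def)
  have kr: "(\<lambda>n. kk (r n)) \<longlonglongrightarrow> k0" using LIMSEQ_subseq_LIMSEQ[OF kk(1) r(1)] by (simp add: o_def)
  have "(\<lambda>n. cmod (fst (U (r n))) + cmod (snd (U (r n)))) \<longlonglongrightarrow> cmod (fst u) + cmod (snd u)"
    by (intro tendsto_intros u1 u2)
  then have "cmod (fst u) + cmod (snd u) = 1" using Un LIMSEQ_unique[OF _ tendsto_const] by simp
  then have unz: "u \<noteq> (0,0)" by auto
  have "(fst u, snd u) \<in> Ldata H1 p1 (k0^2)"
    by (rule lim_lemma[OF H1 p1 kr, of "\<lambda>n. g1 (r n)" "\<lambda>n. ph1 (r n)" "\<lambda>n. D1 (r n)"])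
       (use kk(3) real s1 u1 u2 in auto)
  moreover have "(fst u, snd u) \<in> Ldata H2 p2 (k0^2)"
    by (rule lim_lemma[OF H2 p2 kr, of "\<lambda>n. g2 (r n)" "\<lambda>n. ph2 (r n)" "\<lambda>n. D2 (r n)"])
       (use kk(3) real s2 u1 u2 in auto)
  ultimately have "u \<in> Ldata H1 p1 (of_real lam) \<and> u \<in> Ldata H2 p2 (of_real lam)" using k0sq by simp
  then show ?thesis using unz by blast
qed

definition isol :: "('v,'e) mgraph \<Rightarrow> 'v \<Rightarrow> bool" where
  "isol H p \<longleftrightarrow> (\<forall>e\<in>edges H. etail H e \<noteq> p \<and> ehead H e \<noteq> p)"

lemma isol_M0: "isol H p \<Longrightarrow> M_value H p k 0"
  unfolding M_value_def
  apply (rule exI[of _ "\<lambda>e x. 0"], rule exI[of _ "\<lambda>v. if v = p then 1 else 0"], rule exI[of _ "\<lambda>e x. 0"])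
  by (auto simp: helmholtz_def vertex_continuous_def out_deriv_def isol_def)

lemma same_M_sym: "same_M H1 p1 H2 p2 \<Longrightarrow> same_M H2 p2 H1 p1"
  unfolding same_M_def by metis

lemma isol_transfer:
  assumes H1: "compact_mgraph H1" and H2: "compact_mgraph H2"
    and p2: "p2 \<in> verts H2"
    and sm: "same_M H1 p1 H2 p2" and is1: "isol H1 p1"
  shows "isol H2 p2"
proof (rule ccontr)
  assume nis: "\<not> isol H2 p2"
  obtain S where S: "S sparse_in UNIV"
    and SM: "\<And>k. k \<notin> S \<Longrightarrow> \<exists>m. (\<forall>m'. M_value H1 p1 k m' \<longleftrightarrow> m' = m) \<and> (\<forall>m'. M_value H2 p2 k m' \<longleftrightarrow> m' = m)"
    using sm unfolding same_M_def by blast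
  define k0 where "k0 = 1 + \<i>"
  obtain B where B: "open B" "k0 \<in> B" "\<forall>y\<in>B. y \<noteq> k0 \<longrightarrow> y \<notin> S"
    using sparse_in_not_in[OF S, of k0] by blast
  obtain \<epsilon> where \<epsilon>: "\<epsilon> > 0" "ball k0 \<epsilon> \<subseteq> B" using B open_contains_ball by blast
  define y where "y = k0 * of_real (1 + \<epsilon>/4)"
  have ck: "cmod k0 \<le> 2" unfolding k0_def using cmod_le[of "1 + \<i>"] by simp
  have "cmod (y - k0) = cmod k0 * (\<epsilon>/4)" unfolding y_def using \<epsilon>
    by (simp add: algebra_simps norm_mult flip: distrib_left)
  also have "\<dots> < \<epsilon>" using ck \<epsilon> by (simp add: mult_right_mono[of "cmod k0" 2 "\<epsilon>/4"] less_le_trans[of _ "\<epsilon>/2"])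
  finally have "y \<in> B" using \<epsilon> by (auto simp: dist_norm norm_minus_commute)
  moreover have "y \<noteq> k0" unfolding y_def k0_def using \<epsilon> by (auto simp: complex_eq_iff)
  ultimately have yS: "y \<notin> S" using B by auto
  define z where "z = y^2"
  have z: "z = 2 * \<i> * of_real ((1 + \<epsilon>/4)^2)" unfolding z_def y_def k0_def
    by (simp add: power2_eq_square algebra_simps)
  have zc: "cnj z \<noteq> z" unfolding z using \<epsilon> by (auto simp: complex_eq_iff)
  obtain m where m1: "\<forall>m'. M_value H1 p1 y m' \<longleftrightarrow> m' = m" and m2: "\<forall>m'. M_value H2 p2 y m' \<longleftrightarrow> m' = m"
    using SM[OF yS] by blast
  have "m = 0" using m1 isol_M0[OF is1, of y] by simp
  then have "M_value H2 p2 y 0" using m2 by simp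
  then obtain g phi D where s: "sol H2 p2 z g phi D" and ph: "phi p2 \<noteq> 0" and o: "out_deriv H2 D p2 = 0"
    unfolding M_value_def sol_def z_def by auto
  have "out_deriv H2 (\<lambda>e x. cnj (D e x)) p2 = cnj (out_deriv H2 D p2)" by (simp add: out_deriv_def)
  then have od: "out_deriv H2 (\<lambda>e x. cnj (D e x)) p2 = 0" using o by simp
  have "(cnj z - z) * (\<Sum>e\<in>edges H2. integral {0..elen H2 e} (\<lambda>x. g e x * cnj (g e x))) = 0"
    using green[OF H2 p2 s sol_cnj[OF s]] o od by simp
  then have sz: "(\<Sum>e\<in>edges H2. integral {0..elen H2 e} (\<lambda>x. g e x * cnj (g e x))) = 0" using zc by simp
  have hel: "helmholtz H2 z g D" using s by (simp add: sol_def)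
  from nis obtain e where e: "e \<in> edges H2" "etail H2 e = p2 \<or> ehead H2 e = p2" by (auto simp: isol_def)
  have L: "0 < elen H2 e" using H2 e by (auto simp: compact_mgraph_def)
  have "g e 0 = 0" "g e (elen H2 e) = 0" using zero_from_green[OF H2 hel sz e(1)] L by auto
  moreover have "g e 0 = phi (etail H2 e)" "g e (elen H2 e) = phi (ehead H2 e)"
    using s e by (auto simp: sol_def vertex_continuous_def)
  ultimately show False using e(2) ph by auto
qed

lemma sol_cong:
  assumes H: "compact_mgraph H" and s: "sol H p z f phi D" and eq: "\<And>e x. e \<in> edges H \<Longrightarrow> x \<in> {0..elen H e} \<Longrightarrow> f e x = g e x"
  shows "sol H p z g phi D"
proof -
  have "(g e has_vector_derivative D e x) (at x within {0..elen H e})"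
    if "e \<in> edges H" "x \<in> {0..elen H e}" for e x
  proof -
    have "(f e has_vector_derivative D e x) (at x within {0..elen H e})"
      using s that by (auto simp: sol_def helmholtz_def)
    then show ?thesis
      by (rule has_vector_derivative_transform_within[OF _ zero_less_one that(2)]) (use eq that in auto)
  qed
  moreover have "(D e has_vector_derivative (- z * g e x)) (at x within {0..elen H e})"
    if "e \<in> edges H" "x \<in> {0..elen H e}" for e x
    using s eq that by (auto simp: sol_def helmholtz_def)
  moreover have "vertex_continuous H g phi"
    unfolding vertex_continuous_def
  proof (intro ballI conjI)
    fix e assume e: "e \<in> edges H"
    then have L: "0 \<le> elen H e" using H by (auto simp: compact_mgraph_def)
    have "f e 0 = g e 0" "f e (elen H e) = g e (elen H e)" using eq[OF e] L by auto
    then show "g e 0 = phi (etail H e)" "g e (elen H e) = phi (ehead H e)"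
      using s e by (auto simp: sol_def vertex_continuous_def)
  qed
  ultimately show ?thesis using s by (auto simp: sol_def helmholtz_def)
qed

definition qab :: "'v1 \<Rightarrow> 'v2 \<Rightarrow> 'v \<Rightarrow> 'v \<Rightarrow> ('v1 + 'v2 + 'v) \<Rightarrow> ('v1 + 'v2 + 'v)" where
  "qab p1 p2 a b x = (if x = Inl p1 then Inr (Inr a) else if x = Inr (Inl p2) then Inr (Inr b) else x)"

lemma qab_simps[simp]:
  "qab p1 p2 a b (Inl x) = (if x = p1 then Inr (Inr a) else Inl x)"
  "qab p1 p2 a b (Inr (Inl y)) = (if y = p2 then Inr (Inr b) else Inr (Inl y))"
  "qab p1 p2 a b (Inr (Inr v)) = Inr (Inr v)"
  by (auto simp: qab_def)

definition Grec :: "('v1,'e1) mgraph \<Rightarrow> ('v2,'e2) mgraph \<Rightarrow> ('v,'e) mgraph \<Rightarrow>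
   ('v1 + 'v2 + 'v \<Rightarrow> 'v1 + 'v2 + 'v) \<Rightarrow> ('v1 + 'v2 + 'v, 'e1 + 'e2 + 'e) mgraph" where
  "Grec G1 G2 G0 q = \<lparr> verts = q ` verts (dunion G1 (dunion G2 G0)), edges = edges (dunion G1 (dunion G2 G0)),
      etail = q \<circ> etail (dunion G1 (dunion G2 G0)), ehead = q \<circ> ehead (dunion G1 (dunion G2 G0)),
      elen = elen (dunion G1 (dunion G2 G0)) \<rparr>"

lemma G_eq1:
  "identify (identify (dunion G1 (dunion G2 G0)) (Inl p1) (Inr (Inr a))) (Inr (Inl p2)) (Inr (Inr b))
     = Grec G1 G2 G0 (qab p1 p2 a b)"
proof -
  have c: "(\<lambda>z. if z = Inr (Inl p2) then Inr (Inr b) else z) \<circ> (\<lambda>z. if z = Inl p1 then Inr (Inr a) else z)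
        = qab p1 p2 a b" by (auto simp: qab_def)
  have v: "(\<lambda>z. if z = Inr (Inl p2) then Inr (Inr b) else z) ` ((\<lambda>z. if z = Inl p1 then Inr (Inr a) else z) ` V)
      = qab p1 p2 a b ` V" for V by (simp only: image_comp c)
  have t: "(\<lambda>z. if z = Inr (Inl p2) then Inr (Inr b) else z) \<circ> ((\<lambda>z. if z = Inl p1 then Inr (Inr a) else z) \<circ> f)
      = qab p1 p2 a b \<circ> f" for f :: "'x \<Rightarrow> _" by (simp only: comp_assoc[symmetric] c)
  show ?thesis unfolding identify_def Let_def Grec_def mgraph.select_convs v t ..
qed

lemma G_eq2:
  "identify (identify (dunion G1 (dunion G2 G0)) (Inr (Inl p2)) (Inr (Inr a))) (Inl p1) (Inr (Inr b))
     = Grec G1 G2 G0 (qab p1 p2 b a)"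
proof -
  have c: "(\<lambda>z. if z = Inl p1 then Inr (Inr b) else z) \<circ> (\<lambda>z. if z = Inr (Inl p2) then Inr (Inr a) else z)
        = qab p1 p2 b a" by (auto simp: qab_def)
  have v: "(\<lambda>z. if z = Inl p1 then Inr (Inr b) else z) ` ((\<lambda>z. if z = Inr (Inl p2) then Inr (Inr a) else z) ` V)
      = qab p1 p2 b a ` V" for V by (simp only: image_comp c)
  have t: "(\<lambda>z. if z = Inl p1 then Inr (Inr b) else z) \<circ> ((\<lambda>z. if z = Inr (Inl p2) then Inr (Inr a) else z) \<circ> f)
      = qab p1 p2 b a \<circ> f" for f :: "'x \<Rightarrow> _" by (simp only: comp_assoc[symmetric] c)
  show ?thesis unfolding identify_def Let_def Grec_def mgraph.select_convs v t ..
qed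

lemma Grec_simps[simp]:
  "edges (Grec G1 G2 G0 q) = Inl ` edges G1 \<union> Inr ` (Inl ` edges G2 \<union> Inr ` edges G0)"
  "elen (Grec G1 G2 G0 q) (Inl e) = elen G1 e"
  "elen (Grec G1 G2 G0 q) (Inr (Inl e2)) = elen G2 e2"
  "elen (Grec G1 G2 G0 q) (Inr (Inr e0)) = elen G0 e0"
  "etail (Grec G1 G2 G0 q) (Inl e) = q (Inl (etail G1 e))"
  "etail (Grec G1 G2 G0 q) (Inr (Inl e2)) = q (Inr (Inl (etail G2 e2)))"
  "etail (Grec G1 G2 G0 q) (Inr (Inr e0)) = q (Inr (Inr (etail G0 e0)))"
  "ehead (Grec G1 G2 G0 q) (Inl e) = q (Inl (ehead G1 e))"
  "ehead (Grec G1 G2 G0 q) (Inr (Inl e2)) = q (Inr (Inl (ehead G2 e2)))"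
  "ehead (Grec G1 G2 G0 q) (Inr (Inr e0)) = q (Inr (Inr (ehead G0 e0)))"
  "verts (Grec G1 G2 G0 q) = q ` (Inl ` verts G1 \<union> Inr ` (Inl ` verts G2 \<union> Inr ` verts G0))"
  by (auto simp: Grec_def dunion_def)

lemma sum_split3:
  fixes \<phi> :: "'e1 + 'e2 + 'e \<Rightarrow> complex"
  assumes f: "finite E1" "finite E2" "finite E0"
  shows "(\<Sum>e\<in>{e \<in> Inl ` E1 \<union> Inr ` (Inl ` E2 \<union> Inr ` E0). P e}. \<phi> e) =
    (\<Sum>e\<in>{e\<in>E1. P (Inl e)}. \<phi> (Inl e)) + (\<Sum>e\<in>{e\<in>E2. P (Inr (Inl e))}. \<phi> (Inr (Inl e)))
     + (\<Sum>e\<in>{e\<in>E0. P (Inr (Inr e))}. \<phi> (Inr (Inr e)))"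
proof -
  have eq: "{e \<in> Inl ` E1 \<union> Inr ` (Inl ` E2 \<union> Inr ` E0). P e} =
     Inl ` {e\<in>E1. P (Inl e)} \<union> (Inr ` (Inl ` {e\<in>E2. P (Inr (Inl e))} \<union> Inr ` {e\<in>E0. P (Inr (Inr e))}))"
    by auto
  have s1: "(\<Sum>e\<in>Inr ` (Inl ` {e\<in>E2. P (Inr (Inl e))} \<union> Inr ` {e\<in>E0. P (Inr (Inr e))}). \<phi> e)
     = (\<Sum>e\<in>{e\<in>E2. P (Inr (Inl e))}. \<phi> (Inr (Inl e))) + (\<Sum>e\<in>{e\<in>E0. P (Inr (Inr e))}. \<phi> (Inr (Inr e)))"
  proof -
    have "(\<Sum>e\<in>Inr ` (Inl ` {e\<in>E2. P (Inr (Inl e))} \<union> Inr ` {e\<in>E0. P (Inr (Inr e))}). \<phi> e)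
       = (\<Sum>x\<in>Inl ` {e\<in>E2. P (Inr (Inl e))} \<union> Inr ` {e\<in>E0. P (Inr (Inr e))}. \<phi> (Inr x))"
      by (simp add: sum.reindex)
    also have "\<dots> = (\<Sum>x\<in>Inl ` {e\<in>E2. P (Inr (Inl e))}. \<phi> (Inr x)) + (\<Sum>x\<in>Inr ` {e\<in>E0. P (Inr (Inr e))}. \<phi> (Inr x))"
      using f by (intro sum.union_disjoint) auto
    also have "\<dots> = (\<Sum>e\<in>{e\<in>E2. P (Inr (Inl e))}. \<phi> (Inr (Inl e))) + (\<Sum>e\<in>{e\<in>E0. P (Inr (Inr e))}. \<phi> (Inr (Inr e)))"
      by (simp add: sum.reindex)
    finally show ?thesis .
  qed
  have "(\<Sum>e\<in>Inl ` {e\<in>E1. P (Inl e)} \<union> (Inr ` (Inl ` {e\<in>E2. P (Inr (Inl e))} \<union> Inr ` {e\<in>E0. P (Inr (Inr e))})). \<phi> e)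
    = (\<Sum>e\<in>Inl ` {e\<in>E1. P (Inl e)}. \<phi> e) + (\<Sum>e\<in>Inr ` (Inl ` {e\<in>E2. P (Inr (Inl e))} \<union> Inr ` {e\<in>E0. P (Inr (Inr e))}). \<phi> e)"
    using f by (intro sum.union_disjoint) auto
  also have "(\<Sum>e\<in>Inl ` {e\<in>E1. P (Inl e)}. \<phi> e) = (\<Sum>e\<in>{e\<in>E1. P (Inl e)}. \<phi> (Inl e))"
    by (simp add: sum.reindex)
  finally show ?thesis unfolding eq s1 by (simp add: add.assoc)
qed

lemma out_Grec:
  assumes "finite (edges G1)" "finite (edges G2)" "finite (edges G0)"
  shows "out_deriv (Grec G1 G2 G0 q) D w =
    ((\<Sum>e\<in>{e\<in>edges G1. q (Inl (etail G1 e)) = w}. D (Inl e) 0) - (\<Sum>e\<in>{e\<in>edges G1. q (Inl (ehead G1 e)) = w}. D (Inl e) (elen G1 e)))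
  + ((\<Sum>e\<in>{e\<in>edges G2. q (Inr (Inl (etail G2 e))) = w}. D (Inr (Inl e)) 0) - (\<Sum>e\<in>{e\<in>edges G2. q (Inr (Inl (ehead G2 e))) = w}. D (Inr (Inl e)) (elen G2 e)))
  + ((\<Sum>e\<in>{e\<in>edges G0. q (Inr (Inr (etail G0 e))) = w}. D (Inr (Inr e)) 0) - (\<Sum>e\<in>{e\<in>edges G0. q (Inr (Inr (ehead G0 e))) = w}. D (Inr (Inr e)) (elen G0 e)))"
proof -
  have a: "(\<Sum>e\<in>{e\<in>edges (Grec G1 G2 G0 q). etail (Grec G1 G2 G0 q) e = w}. D e 0) =
    (\<Sum>e\<in>{e\<in>edges G1. q (Inl (etail G1 e)) = w}. D (Inl e) 0) + (\<Sum>e\<in>{e\<in>edges G2. q (Inr (Inl (etail G2 e))) = w}. D (Inr (Inl e)) 0)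
     + (\<Sum>e\<in>{e\<in>edges G0. q (Inr (Inr (etail G0 e))) = w}. D (Inr (Inr e)) 0)"
    unfolding Grec_simps(1) by (subst sum_split3[OF assms]) simp
  have b: "(\<Sum>e\<in>{e\<in>edges (Grec G1 G2 G0 q). ehead (Grec G1 G2 G0 q) e = w}. D e (elen (Grec G1 G2 G0 q) e)) =
    (\<Sum>e\<in>{e\<in>edges G1. q (Inl (ehead G1 e)) = w}. D (Inl e) (elen G1 e)) + (\<Sum>e\<in>{e\<in>edges G2. q (Inr (Inl (ehead G2 e))) = w}. D (Inr (Inl e)) (elen G2 e))
     + (\<Sum>e\<in>{e\<in>edges G0. q (Inr (Inr (ehead G0 e))) = w}. D (Inr (Inr e)) (elen G0 e))"
    unfolding Grec_simps(1) by (subst sum_split3[OF assms]) simp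
  show ?thesis unfolding out_deriv_def a b by (simp add: algebra_simps)
qed

definition geig :: "('w,'d) mgraph \<Rightarrow> complex \<Rightarrow> ('d \<Rightarrow> real \<Rightarrow> complex) \<Rightarrow> bool" where
  "geig G z F \<longleftrightarrow> (\<exists>phi D. helmholtz G z F D \<and> vertex_continuous G F phi \<and> (\<forall>v\<in>verts G. out_deriv G D v = 0))"

definition parts :: "('v1,'e1) mgraph \<Rightarrow> ('v2,'e2) mgraph \<Rightarrow> ('v,'e) mgraph \<Rightarrow> 'v1 \<Rightarrow> 'v2 \<Rightarrow> 'v \<Rightarrow> 'v
   \<Rightarrow> complex \<Rightarrow> ('e1 + 'e2 + 'e \<Rightarrow> real \<Rightarrow> complex) \<Rightarrow> bool" where
  "parts G1 G2 G0 p1 p2 a b z F \<longleftrightarrow> (\<exists>phi1 phi2 phi0 D1 D2 D0.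
     sol G1 p1 z (\<lambda>e. F (Inl e)) phi1 D1 \<and> sol G2 p2 z (\<lambda>e. F (Inr (Inl e))) phi2 D2 \<and>
     helmholtz G0 z (\<lambda>e. F (Inr (Inr e))) D0 \<and> vertex_continuous G0 (\<lambda>e. F (Inr (Inr e))) phi0 \<and>
     (\<forall>v\<in>verts G0 - {a,b}. out_deriv G0 D0 v = 0) \<and>
     phi1 p1 = phi0 a \<and> phi2 p2 = phi0 b \<and>
     out_deriv G0 D0 a + out_deriv G1 D1 p1 = 0 \<and> out_deriv G0 D0 b + out_deriv G2 D2 p2 = 0)"

context
  fixes G1 :: "('v1,'e1) mgraph" and G2 :: "('v2,'e2) mgraph" and G0 :: "('v,'e) mgraph"
    and p1 :: 'v1 and p2 :: 'v2 and a b :: 'v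
  assumes c1: "compact_mgraph G1" and c2: "compact_mgraph G2" and c0: "compact_mgraph G0"
    and ab: "a \<noteq> b"
begin

lemma fins: "finite (edges G1)" "finite (edges G2)" "finite (edges G0)"
  using c1 c2 c0 by (auto simp: compact_mgraph_def)

lemma out_a: "out_deriv (Grec G1 G2 G0 (qab p1 p2 a b)) D (Inr (Inr a)) =
   out_deriv G1 (\<lambda>e. D (Inl e)) p1 + out_deriv G0 (\<lambda>e. D (Inr (Inr e))) a"
proof -
  have s1: "{e\<in>edges G1. qab p1 p2 a b (Inl (f e)) = Inr (Inr a)} = {e\<in>edges G1. f e = p1}" for f :: "'e1 \<Rightarrow> 'v1"
    by auto
  have s2: "{e\<in>edges G2. qab p1 p2 a b (Inr (Inl (f e))) = Inr (Inr a)} = {}" for f :: "'e2 \<Rightarrow> 'v2"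
    using ab by auto
  have s0: "{e\<in>edges G0. qab p1 p2 a b (Inr (Inr (f e))) = Inr (Inr a)} = {e\<in>edges G0. f e = a}" for f :: "'e \<Rightarrow> 'v"
    by auto
  show ?thesis unfolding out_Grec[OF fins] s1 s2 s0 by (simp add: out_deriv_def)
qed

lemma out_b: "out_deriv (Grec G1 G2 G0 (qab p1 p2 a b)) D (Inr (Inr b)) =
   out_deriv G2 (\<lambda>e. D (Inr (Inl e))) p2 + out_deriv G0 (\<lambda>e. D (Inr (Inr e))) b"
proof -
  have s1: "{e\<in>edges G1. qab p1 p2 a b (Inl (f e)) = Inr (Inr b)} = {}" for f :: "'e1 \<Rightarrow> 'v1"
    using ab by auto
  have s2: "{e\<in>edges G2. qab p1 p2 a b (Inr (Inl (f e))) = Inr (Inr b)} = {e\<in>edges G2. f e = p2}" for f :: "'e2 \<Rightarrow> 'v2"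
    by auto
  have s0: "{e\<in>edges G0. qab p1 p2 a b (Inr (Inr (f e))) = Inr (Inr b)} = {e\<in>edges G0. f e = b}" for f :: "'e \<Rightarrow> 'v"
    by auto
  show ?thesis unfolding out_Grec[OF fins] s1 s2 s0 by (simp add: out_deriv_def)
qed

lemma out_v: "v \<noteq> a \<Longrightarrow> v \<noteq> b \<Longrightarrow> out_deriv (Grec G1 G2 G0 (qab p1 p2 a b)) D (Inr (Inr v)) =
   out_deriv G0 (\<lambda>e. D (Inr (Inr e))) v"
proof -
  assume v: "v \<noteq> a" "v \<noteq> b"
  have s1: "{e\<in>edges G1. qab p1 p2 a b (Inl (f e)) = Inr (Inr v)} = {}" for f :: "'e1 \<Rightarrow> 'v1"
    using v by auto
  have s2: "{e\<in>edges G2. qab p1 p2 a b (Inr (Inl (f e))) = Inr (Inr v)} = {}" for f :: "'e2 \<Rightarrow> 'v2"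
    using v by auto
  have s0: "{e\<in>edges G0. qab p1 p2 a b (Inr (Inr (f e))) = Inr (Inr v)} = {e\<in>edges G0. f e = v}" for f :: "'e \<Rightarrow> 'v"
    by auto
  show ?thesis unfolding out_Grec[OF fins] s1 s2 s0 by (simp add: out_deriv_def)
qed

lemma out_1: "u \<noteq> p1 \<Longrightarrow> out_deriv (Grec G1 G2 G0 (qab p1 p2 a b)) D (Inl u) =
   out_deriv G1 (\<lambda>e. D (Inl e)) u"
proof -
  assume u: "u \<noteq> p1"
  have s1: "{e\<in>edges G1. qab p1 p2 a b (Inl (f e)) = Inl u} = {e\<in>edges G1. f e = u}" for f :: "'e1 \<Rightarrow> 'v1"
    using u by auto
  have s2: "{e\<in>edges G2. qab p1 p2 a b (Inr (Inl (f e))) = Inl u} = {}" for f :: "'e2 \<Rightarrow> 'v2"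
    by auto
  have s0: "{e\<in>edges G0. qab p1 p2 a b (Inr (Inr (f e))) = Inl u} = {}" for f :: "'e \<Rightarrow> 'v"
    by auto
  show ?thesis unfolding out_Grec[OF fins] s1 s2 s0 by (simp add: out_deriv_def)
qed

lemma out_2: "u \<noteq> p2 \<Longrightarrow> out_deriv (Grec G1 G2 G0 (qab p1 p2 a b)) D (Inr (Inl u)) =
   out_deriv G2 (\<lambda>e. D (Inr (Inl e))) u"
proof -
  assume u: "u \<noteq> p2"
  have s1: "{e\<in>edges G1. qab p1 p2 a b (Inl (f e)) = Inr (Inl u)} = {}" for f :: "'e1 \<Rightarrow> 'v1"
    by auto
  have s2: "{e\<in>edges G2. qab p1 p2 a b (Inr (Inl (f e))) = Inr (Inl u)} = {e\<in>edges G2. f e = u}" for f :: "'e2 \<Rightarrow> 'v2"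
    using u by auto
  have s0: "{e\<in>edges G0. qab p1 p2 a b (Inr (Inr (f e))) = Inr (Inl u)} = {}" for f :: "'e \<Rightarrow> 'v"
    by auto
  show ?thesis unfolding out_Grec[OF fins] s1 s2 s0 by (simp add: out_deriv_def)
qed


lemma parts_of_geig:
  assumes a: "a \<in> verts G0" and b: "b \<in> verts G0"
    and g: "geig (Grec G1 G2 G0 (qab p1 p2 a b)) z F"
  shows "parts G1 G2 G0 p1 p2 a b z F"
proof -
  let ?G = "Grec G1 G2 G0 (qab p1 p2 a b)"
  obtain phi D where h: "helmholtz ?G z F D" and vc: "vertex_continuous ?G F phi"
    and k: "\<forall>v\<in>verts ?G. out_deriv ?G D v = 0"
    using g unfolding geig_def by blast
  define phi1 where "phi1 u = phi (qab p1 p2 a b (Inl u))" for u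
  define phi2 where "phi2 u = phi (qab p1 p2 a b (Inr (Inl u)))" for u
  define phi0 where "phi0 v = phi (Inr (Inr v))" for v :: 'v
  have s1: "sol G1 p1 z (\<lambda>e. F (Inl e)) phi1 (\<lambda>e. D (Inl e))"
    unfolding sol_def
  proof (intro conjI ballI)
    show "helmholtz G1 z (\<lambda>e. F (Inl e)) (\<lambda>e. D (Inl e))"
      using h unfolding helmholtz_def by force
    show "vertex_continuous G1 (\<lambda>e. F (Inl e)) phi1"
      using vc unfolding vertex_continuous_def phi1_def by force
    fix u assume u: "u \<in> verts G1 - {p1}"
    have "Inl u = qab p1 p2 a b (Inl u)" using u by simp
    then have "Inl u \<in> verts ?G" using u by (simp only: Grec_simps) blast
    then have "out_deriv ?G D (Inl u) = 0" using k by blast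
    then show "out_deriv G1 (\<lambda>e. D (Inl e)) u = 0" using out_1[of u D] u by simp
  qed
  have s2: "sol G2 p2 z (\<lambda>e. F (Inr (Inl e))) phi2 (\<lambda>e. D (Inr (Inl e)))"
    unfolding sol_def
  proof (intro conjI ballI)
    show "helmholtz G2 z (\<lambda>e. F (Inr (Inl e))) (\<lambda>e. D (Inr (Inl e)))"
      using h unfolding helmholtz_def by force
    show "vertex_continuous G2 (\<lambda>e. F (Inr (Inl e))) phi2"
      using vc unfolding vertex_continuous_def phi2_def by force
    fix u assume u: "u \<in> verts G2 - {p2}"
    have "Inr (Inl u) = qab p1 p2 a b (Inr (Inl u))" using u by simp
    then have "Inr (Inl u) \<in> verts ?G" using u by (simp only: Grec_simps) blast
    then have "out_deriv ?G D (Inr (Inl u)) = 0" using k by blast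
    then show "out_deriv G2 (\<lambda>e. D (Inr (Inl e))) u = 0" using out_2[of u D] u by simp
  qed
  have h0: "helmholtz G0 z (\<lambda>e. F (Inr (Inr e))) (\<lambda>e. D (Inr (Inr e)))"
    using h unfolding helmholtz_def by force
  have v0: "vertex_continuous G0 (\<lambda>e. F (Inr (Inr e))) phi0"
    using vc unfolding vertex_continuous_def phi0_def by force
  have vin: "Inr (Inr v) \<in> verts ?G" if "v \<in> verts G0" for v
  proof -
    have "Inr (Inr v) = qab p1 p2 a b (Inr (Inr v))" by simp
    then show ?thesis using that by (simp only: Grec_simps) blast
  qed
  have k0: "\<forall>v\<in>verts G0 - {a,b}. out_deriv G0 (\<lambda>e. D (Inr (Inr e))) v = 0"
    using k vin out_v by fastforce
  have ka: "out_deriv G0 (\<lambda>e. D (Inr (Inr e))) a + out_deriv G1 (\<lambda>e. D (Inl e)) p1 = 0"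
  proof -
    have "out_deriv ?G D (Inr (Inr a)) = 0" using k vin[OF a] by blast
    then show ?thesis using out_a[of D] by (simp add: add.commute)
  qed
  have kb: "out_deriv G0 (\<lambda>e. D (Inr (Inr e))) b + out_deriv G2 (\<lambda>e. D (Inr (Inl e))) p2 = 0"
  proof -
    have "out_deriv ?G D (Inr (Inr b)) = 0" using k vin[OF b] by blast
    then show ?thesis using out_b[of D] by (simp add: add.commute)
  qed
  have "phi1 p1 = phi0 a" "phi2 p2 = phi0 b" by (auto simp: phi1_def phi2_def phi0_def)
  then show ?thesis unfolding parts_def using s1 s2 h0 v0 k0 ka kb by blast
qed

lemma geig_of_parts:
  assumes pa: "parts G1 G2 G0 p1 p2 a b z F"
  shows "geig (Grec G1 G2 G0 (qab p1 p2 a b)) z F"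
proof -
  let ?G = "Grec G1 G2 G0 (qab p1 p2 a b)"
  obtain phi1 phi2 phi0 D1 D2 D0 where
    s1: "sol G1 p1 z (\<lambda>e. F (Inl e)) phi1 D1" and s2: "sol G2 p2 z (\<lambda>e. F (Inr (Inl e))) phi2 D2"
    and h0: "helmholtz G0 z (\<lambda>e. F (Inr (Inr e))) D0" and v0: "vertex_continuous G0 (\<lambda>e. F (Inr (Inr e))) phi0"
    and k0: "\<forall>v\<in>verts G0 - {a,b}. out_deriv G0 D0 v = 0"
    and pa1: "phi1 p1 = phi0 a" and pb2: "phi2 p2 = phi0 b"
    and ka: "out_deriv G0 D0 a + out_deriv G1 D1 p1 = 0" and kb: "out_deriv G0 D0 b + out_deriv G2 D2 p2 = 0"
    using pa unfolding parts_def by blast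
  define phi where "phi = case_sum phi1 (case_sum phi2 phi0)"
  define D where "D = case_sum D1 (case_sum D2 D0)"
  have Dp: "(\<lambda>e. D (Inl e)) = D1" "(\<lambda>e. D (Inr (Inl e))) = D2" "(\<lambda>e. D (Inr (Inr e))) = D0"
    by (auto simp: D_def)
  have "helmholtz ?G z F D"
    unfolding helmholtz_def
  proof (intro ballI)
    fix E x assume E: "E \<in> edges ?G" and x: "x \<in> {0..elen ?G E}"
    show "(F E has_vector_derivative D E x) (at x within {0..elen ?G E}) \<and>
          (D E has_vector_derivative - z * F E x) (at x within {0..elen ?G E})"
      using E x s1 s2 h0 by (auto simp: D_def sol_def helmholtz_def)
  qed
  moreover have "vertex_continuous ?G F phi"
    unfolding vertex_continuous_def
  proof (intro ballI)
    fix E assume E: "E \<in> edges ?G"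
    show "F E 0 = phi (etail ?G E) \<and> F E (elen ?G E) = phi (ehead ?G E)"
      using E s1 s2 v0 pa1 pb2 by (auto simp: phi_def sol_def vertex_continuous_def)
  qed
  moreover have "\<forall>w\<in>verts ?G. out_deriv ?G D w = 0"
  proof
    fix w assume "w \<in> verts ?G"
    then have wim: "w \<in> qab p1 p2 a b ` (Inl ` verts G1 \<union> Inr ` (Inl ` verts G2 \<union> Inr ` verts G0))"
      by (simp only: Grec_simps)
    obtain x where x: "x \<in> Inl ` verts G1 \<union> Inr ` (Inl ` verts G2 \<union> Inr ` verts G0)"
      and w: "w = qab p1 p2 a b x" using wim by (elim imageE) blast
    from x show "out_deriv ?G D w = 0"
    proof (elim UnE imageE)
      fix u assume "u \<in> verts G1" "x = Inl u"
      then show ?thesis using w s1 out_1[of u D] out_a[of D] ka Dp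
        by (cases "u = p1") (auto simp: sol_def add.commute)
    next
      fix y u assume "u \<in> verts G2" "y = Inl u" "x = Inr y"
      then show ?thesis using w s2 out_2[of u D] out_b[of D] kb Dp
        by (cases "u = p2") (auto simp: sol_def add.commute)
    next
      fix y v assume "v \<in> verts G0" "y = Inr v" "x = Inr y"
      then show ?thesis using w k0 out_v[of v D] out_a[of D] out_b[of D] ka kb Dp s1 s2
        by (cases "v = a"; cases "v = b") (auto simp: sol_def add.commute)
    qed
  qed
  ultimately show ?thesis unfolding geig_def by blast
qed

end

definition cD :: "('v,'e) mgraph \<Rightarrow> ('e \<Rightarrow> real \<Rightarrow> complex) \<Rightarrow> 'e \<Rightarrow> real \<Rightarrow> complex" where
  "cD H f e x = vector_derivative (f e) (at x within {0..elen H e})"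

definition yv :: "('v,'e) mgraph \<Rightarrow> 'v \<Rightarrow> ('e \<Rightarrow> real \<Rightarrow> complex) \<Rightarrow> complex" where
  "yv H p f = out_deriv H (cD H f) p"

definition vv :: "('v,'e) mgraph \<Rightarrow> 'v \<Rightarrow> ('e \<Rightarrow> real \<Rightarrow> complex) \<Rightarrow> complex" where
  "vv H p f = (if \<exists>e\<in>edges H. etail H e = p then f (SOME e. e \<in> edges H \<and> etail H e = p) 0
      else if \<exists>e\<in>edges H. ehead H e = p then f (SOME e. e \<in> edges H \<and> ehead H e = p) (elen H (SOME e. e \<in> edges H \<and> ehead H e = p))
      else 0)"

definition restr :: "('v,'e) mgraph \<Rightarrow> ('e \<Rightarrow> real \<Rightarrow> complex) \<Rightarrow> 'e \<Rightarrow> real \<Rightarrow> complex" where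
  "restr H f e x = (if e \<in> edges H \<and> x \<in> {0..elen H e} then f e x else 0)"

lemma out_deriv_cong:
  assumes "\<And>e. e \<in> edges H \<Longrightarrow> D e 0 = D' e 0 \<and> D e (elen H e) = D' e (elen H e)"
  shows "out_deriv H D p = out_deriv H D' p"
  unfolding out_deriv_def using assms by (auto intro!: sum.cong arg_cong2[where f="(-)"])

lemma cD_eq:
  assumes H: "compact_mgraph H" and h: "helmholtz H z f D" and e: "e \<in> edges H" and x: "x \<in> {0..elen H e}"
  shows "cD H f e x = D e x"
proof -
  have L: "0 < elen H e" using H e by (auto simp: compact_mgraph_def)
  have "(f e has_vector_derivative D e x) (at x within cbox 0 (elen H e))"
    using h e x by (auto simp: helmholtz_def)
  then show ?thesis unfolding cD_def using vector_derivative_within_cbox[OF L] x by auto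
qed

lemma yv_eq:
  assumes H: "compact_mgraph H" and h: "helmholtz H z f D"
  shows "yv H p f = out_deriv H D p"
  unfolding yv_def
proof (rule out_deriv_cong)
  fix e assume e: "e \<in> edges H"
  then have L: "0 \<le> elen H e" using H by (auto simp: compact_mgraph_def)
  show "cD H f e 0 = D e 0 \<and> cD H f e (elen H e) = D e (elen H e)"
    using cD_eq[OF H h e] L by auto
qed

lemma vv_eq:
  assumes vc: "vertex_continuous H f phi" and ni: "\<not> isol H p"
  shows "vv H p f = phi p"
proof (cases "\<exists>e\<in>edges H. etail H e = p")
  case True
  then have "(SOME e. e \<in> edges H \<and> etail H e = p) \<in> edges H \<and> etail H (SOME e. e \<in> edges H \<and> etail H e = p) = p"
    by (metis (mono_tags, lifting) someI_ex)
  then show ?thesis using True vc by (auto simp: vv_def vertex_continuous_def)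
next
  case False
  then have T: "\<exists>e\<in>edges H. ehead H e = p" using ni by (auto simp: isol_def)
  then have "(SOME e. e \<in> edges H \<and> ehead H e = p) \<in> edges H \<and> ehead H (SOME e. e \<in> edges H \<and> ehead H e = p) = p"
    by (metis (mono_tags, lifting) someI_ex)
  then show ?thesis using T False vc by (auto simp: vv_def vertex_continuous_def)
qed

lemma vv_isol: "isol H p \<Longrightarrow> vv H p f = 0"
  by (auto simp: vv_def isol_def)

lemma out_isol: "isol H p \<Longrightarrow> out_deriv H D p = 0"
proof -
  assume "isol H p"
  then have e1: "{e \<in> edges H. etail H e = p} = {}" and e2: "{e \<in> edges H. ehead H e = p} = {}"
    by (auto simp: isol_def)
  show ?thesis unfolding out_deriv_def e1 e2 by simp
qed

lemma vv_lin: "vv H p (\<lambda>e x. \<Sum>i<n. c i * f i e x) = (\<Sum>i<n. c i * vv H p (f i))"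
  by (auto simp: vv_def)

lemma out_deriv_lin: "out_deriv H (\<lambda>e x. \<Sum>i<n. c i * D i e x) p = (\<Sum>i<n. c i * out_deriv H (D i) p)"
  unfolding out_deriv_def
  by (simp add: sum_subtractf right_diff_distrib sum_distrib_left sum.swap[of _ "{..<n}"])

lemma helm_lin:
  assumes "\<And>i. i < n \<Longrightarrow> helmholtz H z (f i) (D i)"
  shows "helmholtz H z (\<lambda>e x. \<Sum>i<n. c i * f i e x) (\<lambda>e x. \<Sum>i<n. c i * D i e x)"
  unfolding helmholtz_def
proof (intro ballI conjI)
  fix e x assume e: "e \<in> edges H" and x: "x \<in> {0..elen H e}"
  show "((\<lambda>x. \<Sum>i<n. c i * f i e x) has_vector_derivative (\<Sum>i<n. c i * D i e x)) (at x within {0..elen H e})"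
    using assms e x by (intro has_vector_derivative_sum has_vector_derivative_mult_right) (auto simp: helmholtz_def)
  have "((\<lambda>x. \<Sum>i<n. c i * D i e x) has_vector_derivative (\<Sum>i<n. c i * (- z * f i e x))) (at x within {0..elen H e})"
    using assms e x by (intro has_vector_derivative_sum has_vector_derivative_mult_right) (auto simp: helmholtz_def)
  then show "((\<lambda>x. \<Sum>i<n. c i * D i e x) has_vector_derivative (- z * (\<Sum>i<n. c i * f i e x))) (at x within {0..elen H e})"
    by (simp add: sum_distrib_left algebra_simps)
qed

lemma yv_lin:
  assumes H: "compact_mgraph H" and h: "\<And>i. i < n \<Longrightarrow> helmholtz H z (f i) (D i)"
  shows "yv H p (\<lambda>e x. \<Sum>i<n. c i * f i e x) = (\<Sum>i<n. c i * yv H p (f i))"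
proof -
  have "yv H p (\<lambda>e x. \<Sum>i<n. c i * f i e x) = out_deriv H (\<lambda>e x. \<Sum>i<n. c i * D i e x) p"
    by (rule yv_eq[OF H helm_lin[OF h]])
  also have "\<dots> = (\<Sum>i<n. c i * out_deriv H (D i) p)" by (rule out_deriv_lin)
  also have "\<dots> = (\<Sum>i<n. c i * yv H p (f i))" using yv_eq[OF H h] by simp
  finally show ?thesis .
qed

lemma sol_fun_upd:
  assumes s: "sol H p z f phi D"
    and c: "\<And>e. e \<in> edges H \<Longrightarrow> etail H e = q \<Longrightarrow> f e 0 = w"
    and c': "\<And>e. e \<in> edges H \<Longrightarrow> ehead H e = q \<Longrightarrow> f e (elen H e) = w"
  shows "sol H p z f (phi(q := w)) D"
  using s c c' unfolding sol_def vertex_continuous_def by auto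

definition coef :: "complex \<times> complex \<Rightarrow> complex \<Rightarrow> complex \<Rightarrow> complex" where
  "coef u x y = (if snd u \<noteq> 0 then y / snd u else x / fst u)"

lemma coef_scale: "u \<noteq> (0,0) \<Longrightarrow> coef u (c * fst u) (c * snd u) = c"
  by (cases u) (auto simp: coef_def)

lemma coef_lin: "coef u (\<Sum>i<n. c i * x i) (\<Sum>i<n. c i * y i) = (\<Sum>i<n. c i * coef u (x i) (y i))"
  by (auto simp: coef_def sum_divide_distrib)

lemma coef_00: "coef u 0 0 = 0" by (simp add: coef_def)

lemma coef_prop:
  assumes H: "compact_mgraph H" and s: "sol H p (of_real lam) f phi D"
    and span: "\<And>x y. (x,y) \<in> Ldata H p (of_real lam) \<Longrightarrow> \<exists>c. x = c * fst u \<and> y = c * snd u"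
    and unz: "u \<noteq> (0,0)"
  shows "out_deriv H D p = coef u (vv H p f) (yv H p f) * snd u \<and>
         (\<not> isol H p \<longrightarrow> phi p = coef u (vv H p f) (yv H p f) * fst u)"
proof -
  have "(phi p, out_deriv H D p) \<in> Ldata H p (of_real lam)" using s unfolding Ldata_def by blast
  then obtain c where c: "phi p = c * fst u" "out_deriv H D p = c * snd u" using span by blast
  have y: "yv H p f = out_deriv H D p" using yv_eq[OF H] s by (auto simp: sol_def)
  show ?thesis
  proof (cases "isol H p")
    case True
    then show ?thesis using out_isol[OF True] vv_isol[OF True] y by (simp add: coef_00)
  next
    case False
    then have "vv H p f = phi p" using vv_eq s by (auto simp: sol_def)
    then have "coef u (vv H p f) (yv H p f) = c" using c y coef_scale[OF unz] by simp
    then show ?thesis using c False by simp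
  qed
qed

lemma out_deriv_add_scale:
  "out_deriv H (\<lambda>e x. D e x + c * E e x) p = out_deriv H D p + c * out_deriv H E p"
  by (simp add: out_deriv_def sum.distrib sum_distrib_left algebra_simps sum_subtractf)

definition alph :: "('v1,'e1) mgraph \<Rightarrow> 'v1 \<Rightarrow> complex \<times> complex \<Rightarrow> ('e1 + 'x \<Rightarrow> real \<Rightarrow> complex) \<Rightarrow> complex" where
  "alph G1 p1 u F = coef u (vv G1 p1 (\<lambda>e. F (Inl e))) (yv G1 p1 (\<lambda>e. F (Inl e)))"
definition bet :: "('v2,'e2) mgraph \<Rightarrow> 'v2 \<Rightarrow> complex \<times> complex \<Rightarrow> ('x + 'e2 + 'y \<Rightarrow> real \<Rightarrow> complex) \<Rightarrow> complex" where
  "bet G2 p2 u F = coef u (vv G2 p2 (\<lambda>e. F (Inr (Inl e)))) (yv G2 p2 (\<lambda>e. F (Inr (Inl e))))"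
definition Sig :: "('v1,'e1) mgraph \<Rightarrow> ('v2,'e2) mgraph \<Rightarrow> ('e1 \<Rightarrow> real \<Rightarrow> complex) \<Rightarrow> ('e2 \<Rightarrow> real \<Rightarrow> complex)
   \<Rightarrow> 'e1 + 'e2 + 'e \<Rightarrow> real \<Rightarrow> complex" where
  "Sig G1 G2 s1 s2 = case_sum (restr G1 s1) (case_sum (\<lambda>e x. - restr G2 s2 e x) (\<lambda>e x. 0))"
definition Tm where
  "Tm G1 G2 p1 p2 u s1 s2 F = (\<lambda>E x. F E x + (bet G2 p2 u F - alph G1 p1 u F) * Sig G1 G2 s1 s2 E x)"

definition supp :: "('w,'d) mgraph \<Rightarrow> ('d \<Rightarrow> real \<Rightarrow> complex) \<Rightarrow> bool" where
  "supp G F \<longleftrightarrow> (\<forall>e. e \<notin> edges G \<longrightarrow> (\<forall>x. F e x = 0)) \<and> (\<forall>e\<in>edges G. \<forall>x. x \<notin> {0..elen G e} \<longrightarrow> F e x = 0)"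

lemma std_iff: "std_eigenfun G lam F \<longleftrightarrow> supp G F \<and> geig G (of_real lam) F"
  unfolding std_eigenfun_def supp_def geig_def by blast

lemma supp_Grec: "supp (Grec G1 G2 G0 q) F \<longleftrightarrow> supp (Grec G1 G2 G0 q') F"
  unfolding supp_def Grec_def by simp

lemma u_cancel: "u \<noteq> (0,0) \<Longrightarrow> x * fst u = y * fst u \<Longrightarrow> x * snd u = y * snd u \<Longrightarrow> (x::complex) = y"
  by (cases u) auto

lemma supp_add: "supp G F \<Longrightarrow> supp G S \<Longrightarrow> supp G (\<lambda>E x. F E x + k * S E x)"
  unfolding supp_def by auto

lemma supp_Sig: "supp (Grec G1 G2 G0 q) (Sig G1 G2 s1 s2)"
  unfolding supp_def Sig_def restr_def by (auto split: sum.splits)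

context
  fixes G1 :: "('v1,'e1) mgraph" and G2 :: "('v2,'e2) mgraph" and G0 :: "('v,'e) mgraph"
    and p1 :: 'v1 and p2 :: 'v2 and u :: "complex \<times> complex"
    and s1 :: "'e1 \<Rightarrow> real \<Rightarrow> complex" and s2 :: "'e2 \<Rightarrow> real \<Rightarrow> complex" and lam :: real
  assumes c1: "compact_mgraph G1" and c2: "compact_mgraph G2" and c0: "compact_mgraph G0"
    and unz: "u \<noteq> (0,0)"
    and span1: "\<And>x y. (x,y) \<in> Ldata G1 p1 (of_real lam) \<Longrightarrow> \<exists>c. x = c * fst u \<and> y = c * snd u"
    and span2: "\<And>x y. (x,y) \<in> Ldata G2 p2 (of_real lam) \<Longrightarrow> \<exists>c. x = c * fst u \<and> y = c * snd u"
    and isoeq: "isol G1 p1 \<longleftrightarrow> isol G2 p2"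
    and sig1: "\<exists>\<phi> D. sol G1 p1 (of_real lam) s1 \<phi> D \<and> \<phi> p1 = fst u \<and> out_deriv G1 D p1 = snd u"
    and sig1z: "isol G1 p1 \<Longrightarrow> \<forall>e x. s1 e x = 0"
    and sig2: "\<exists>\<phi> D. sol G2 p2 (of_real lam) s2 \<phi> D \<and> \<phi> p2 = fst u \<and> out_deriv G2 D p2 = snd u"
    and sig2z: "isol G2 p2 \<Longrightarrow> \<forall>e x. s2 e x = 0"
begin

lemma Sig_zero: "isol G1 p1 \<Longrightarrow> Sig G1 G2 s1 s2 E x = (0::complex)"
  using sig1z sig2z isoeq by (auto simp: Sig_def restr_def split: sum.splits)

lemma T_main:
  fixes a b :: 'v and F :: "'e1 + 'e2 + 'e \<Rightarrow> real \<Rightarrow> complex"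
  assumes ab: "a \<noteq> b" and a: "a \<in> verts G0" and b: "b \<in> verts G0"
    and F: "std_eigenfun (Grec G1 G2 G0 (qab p1 p2 a b)) lam F"
  shows "std_eigenfun (Grec G1 G2 G0 (qab p1 p2 b a)) lam (Tm G1 G2 p1 p2 u s1 s2 F) \<and>
         Tm G1 G2 p1 p2 u s1 s2 (Tm G1 G2 p1 p2 u s1 s2 F) = F"
proof -
  let ?z = "complex_of_real lam"
  have sF: "supp (Grec G1 G2 G0 (qab p1 p2 a b)) F" and gF: "geig (Grec G1 G2 G0 (qab p1 p2 a b)) ?z F"
    using F by (auto simp: std_iff)
  have "parts G1 G2 G0 p1 p2 a b ?z F" by (rule parts_of_geig[OF c1 c2 c0 ab a b gF])
  then obtain phi1 phi2 phi0 D1 D2 D0 where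
    s1F: "sol G1 p1 ?z (\<lambda>e. F (Inl e)) phi1 D1" and s2F: "sol G2 p2 ?z (\<lambda>e. F (Inr (Inl e))) phi2 D2"
    and h0: "helmholtz G0 ?z (\<lambda>e. F (Inr (Inr e))) D0" and v0: "vertex_continuous G0 (\<lambda>e. F (Inr (Inr e))) phi0"
    and k0: "\<forall>v\<in>verts G0 - {a,b}. out_deriv G0 D0 v = 0"
    and pa1: "phi1 p1 = phi0 a" and pb2: "phi2 p2 = phi0 b"
    and ka: "out_deriv G0 D0 a + out_deriv G1 D1 p1 = 0" and kb: "out_deriv G0 D0 b + out_deriv G2 D2 p2 = 0"
    unfolding parts_def by blast
  define \<alpha> where "\<alpha> = alph G1 p1 u F"
  define \<beta> where "\<beta> = bet G2 p2 u F"
  define c where "c = \<beta> - \<alpha>"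
  have cp1: "out_deriv G1 D1 p1 = \<alpha> * snd u" "\<not> isol G1 p1 \<Longrightarrow> phi1 p1 = \<alpha> * fst u"
    using coef_prop[OF c1 s1F span1 unz] unfolding \<alpha>_def alph_def by auto
  have cp2: "out_deriv G2 D2 p2 = \<beta> * snd u" "\<not> isol G2 p2 \<Longrightarrow> phi2 p2 = \<beta> * fst u"
    using coef_prop[OF c2 s2F span2 unz] unfolding \<beta>_def bet_def by auto
  obtain \<phi>1 E1 where \<sigma>1: "sol G1 p1 ?z s1 \<phi>1 E1" "\<phi>1 p1 = fst u" "out_deriv G1 E1 p1 = snd u"
    using sig1 by blast
  obtain \<phi>2 E2 where \<sigma>2: "sol G2 p2 ?z s2 \<phi>2 E2" "\<phi>2 p2 = fst u" "out_deriv G2 E2 p2 = snd u"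
    using sig2 by blast
  define F' where "F' = Tm G1 G2 p1 p2 u s1 s2 F"
  have F'1: "F' (Inl e) x = F (Inl e) x + c * restr G1 s1 e x" for e x
    by (simp add: F'_def Tm_def Sig_def c_def \<alpha>_def \<beta>_def)
  have F'2: "F' (Inr (Inl e)) x = F (Inr (Inl e)) x + (- c) * restr G2 s2 e x" for e x
    by (simp add: F'_def Tm_def Sig_def c_def \<alpha>_def \<beta>_def algebra_simps)
  have F'0: "(\<lambda>e. F' (Inr (Inr e))) = (\<lambda>e. F (Inr (Inr e)))"
    by (simp add: F'_def Tm_def Sig_def)
  define phi1' where "phi1' = (\<lambda>v. phi1 v + c * \<phi>1 v)(p1 := phi0 b)"
  define phi2' where "phi2' = (\<lambda>v. phi2 v + (- c) * \<phi>2 v)(p2 := phi0 a)"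
  define D1' where "D1' = (\<lambda>e x. D1 e x + c * E1 e x)"
  define D2' where "D2' = (\<lambda>e x. D2 e x + (- c) * E2 e x)"
  have sA1: "sol G1 p1 ?z (\<lambda>e x. F (Inl e) x + c * s1 e x) (\<lambda>v. phi1 v + c * \<phi>1 v) D1'"
    unfolding D1'_def by (rule sol_add[OF s1F sol_scale[OF \<sigma>1(1)]])
  have sB1: "sol G1 p1 ?z (\<lambda>e. F' (Inl e)) (\<lambda>v. phi1 v + c * \<phi>1 v) D1'"
    by (rule sol_cong[OF c1 sA1]) (simp add: F'1 restr_def)
  have sol1': "sol G1 p1 ?z (\<lambda>e. F' (Inl e)) phi1' D1'"
    unfolding phi1'_def
  proof (rule sol_fun_upd[OF sB1])
    have key: "phi1 p1 + c * \<phi>1 p1 = phi0 b" if "\<not> isol G1 p1"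
    proof -
      have "\<not> isol G2 p2" using that isoeq by simp
      then show ?thesis using cp1(2)[OF that] cp2(2) pb2 \<sigma>1(2) by (simp add: c_def algebra_simps)
    qed
    fix e assume e: "e \<in> edges G1"
    { assume "etail G1 e = p1"
      then have "\<not> isol G1 p1" using e by (auto simp: isol_def)
      then show "F' (Inl e) 0 = phi0 b" using sB1 e key \<open>etail G1 e = p1\<close>
        by (auto simp: sol_def vertex_continuous_def) }
    { assume "ehead G1 e = p1"
      then have "\<not> isol G1 p1" using e by (auto simp: isol_def)
      then show "F' (Inl e) (elen G1 e) = phi0 b" using sB1 e key \<open>ehead G1 e = p1\<close>
        by (auto simp: sol_def vertex_continuous_def) }
  qed
  have sA2: "sol G2 p2 ?z (\<lambda>e x. F (Inr (Inl e)) x + (- c) * s2 e x) (\<lambda>v. phi2 v + (- c) * \<phi>2 v) D2'"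
    unfolding D2'_def by (rule sol_add[OF s2F sol_scale[OF \<sigma>2(1)]])
  have sB2: "sol G2 p2 ?z (\<lambda>e. F' (Inr (Inl e))) (\<lambda>v. phi2 v + (- c) * \<phi>2 v) D2'"
    by (rule sol_cong[OF c2 sA2]) (simp add: F'2 restr_def)
  have sol2': "sol G2 p2 ?z (\<lambda>e. F' (Inr (Inl e))) phi2' D2'"
    unfolding phi2'_def
  proof (rule sol_fun_upd[OF sB2])
    have key: "phi2 p2 + (- c) * \<phi>2 p2 = phi0 a" if "\<not> isol G2 p2"
    proof -
      have "\<not> isol G1 p1" using that isoeq by simp
      then show ?thesis using cp1(2) cp2(2)[OF that] pa1 \<sigma>2(2) by (simp add: c_def algebra_simps)
    qed
    fix e assume e: "e \<in> edges G2"
    { assume "etail G2 e = p2"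
      then have "\<not> isol G2 p2" using e by (auto simp: isol_def)
      then show "F' (Inr (Inl e)) 0 = phi0 a" using sB2 e key \<open>etail G2 e = p2\<close>
        by (auto simp: sol_def vertex_continuous_def) }
    { assume "ehead G2 e = p2"
      then have "\<not> isol G2 p2" using e by (auto simp: isol_def)
      then show "F' (Inr (Inl e)) (elen G2 e) = phi0 a" using sB2 e key \<open>ehead G2 e = p2\<close>
        by (auto simp: sol_def vertex_continuous_def) }
  qed
  have o1: "out_deriv G1 D1' p1 = \<beta> * snd u"
    unfolding D1'_def out_deriv_add_scale cp1(1) \<sigma>1(3) by (simp add: c_def algebra_simps)
  have o2: "out_deriv G2 D2' p2 = \<alpha> * snd u"
    unfolding D2'_def out_deriv_add_scale cp2(1) \<sigma>2(3) by (simp add: c_def algebra_simps)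
  have "parts G1 G2 G0 p1 p2 b a ?z F'"
    unfolding parts_def
  proof (intro exI conjI)
    show "sol G1 p1 ?z (\<lambda>e. F' (Inl e)) phi1' D1'" by (rule sol1')
    show "sol G2 p2 ?z (\<lambda>e. F' (Inr (Inl e))) phi2' D2'" by (rule sol2')
    show "helmholtz G0 ?z (\<lambda>e. F' (Inr (Inr e))) D0" unfolding F'0 by (rule h0)
    show "vertex_continuous G0 (\<lambda>e. F' (Inr (Inr e))) phi0" unfolding F'0 by (rule v0)
    show "\<forall>v\<in>verts G0 - {b,a}. out_deriv G0 D0 v = 0" using k0 by (simp add: insert_commute)
    show "phi1' p1 = phi0 b" by (simp add: phi1'_def)
    show "phi2' p2 = phi0 a" by (simp add: phi2'_def)
    show "out_deriv G0 D0 b + out_deriv G1 D1' p1 = 0" using o1 kb cp2(1) by simp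
    show "out_deriv G0 D0 a + out_deriv G2 D2' p2 = 0" using o2 ka cp1(1) by simp
  qed
  then have gF': "geig (Grec G1 G2 G0 (qab p1 p2 b a)) ?z F'"
    by (rule geig_of_parts[OF c1 c2 c0 ab[symmetric]])
  have sF': "supp (Grec G1 G2 G0 (qab p1 p2 b a)) F'"
  proof -
    have "supp (Grec G1 G2 G0 (qab p1 p2 b a)) F" using sF supp_Grec by blast
    then show ?thesis unfolding F'_def Tm_def by (rule supp_add[OF _ supp_Sig])
  qed
  have std': "std_eigenfun (Grec G1 G2 G0 (qab p1 p2 b a)) lam F'" using gF' sF' by (simp add: std_iff)
  have TT: "Tm G1 G2 p1 p2 u s1 s2 F' = F"
  proof (cases "isol G1 p1")
    case True
    have z: "Sig G1 G2 s1 s2 = (\<lambda>E x. 0 :: complex)"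
      by (intro ext) (rule Sig_zero[OF True])
    show ?thesis unfolding F'_def Tm_def z by simp
  next
    case False
    then have nis2: "\<not> isol G2 p2" using isoeq by simp
    have ca: "alph G1 p1 u F' = \<beta>"
    proof (rule u_cancel[OF unz])
      have cp: "out_deriv G1 D1' p1 = alph G1 p1 u F' * snd u" "phi1' p1 = alph G1 p1 u F' * fst u"
        using coef_prop[OF c1 sol1' span1 unz] False unfolding alph_def by auto
      show "alph G1 p1 u F' * snd u = \<beta> * snd u" using cp(1) o1 by metis
      show "alph G1 p1 u F' * fst u = \<beta> * fst u" using cp(2) cp2(2)[OF nis2] pb2 by (simp add: phi1'_def)
    qed
    have cb: "bet G2 p2 u F' = \<alpha>"
    proof (rule u_cancel[OF unz])
      have cp: "out_deriv G2 D2' p2 = bet G2 p2 u F' * snd u" "phi2' p2 = bet G2 p2 u F' * fst u"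
        using coef_prop[OF c2 sol2' span2 unz] nis2 unfolding bet_def by auto
      show "bet G2 p2 u F' * snd u = \<alpha> * snd u" using cp(1) o2 by metis
      show "bet G2 p2 u F' * fst u = \<alpha> * fst u" using cp(2) cp1(2)[OF False] pa1 by (simp add: phi2'_def)
    qed
    show ?thesis
    proof (rule ext, rule ext)
      fix E x
      show "Tm G1 G2 p1 p2 u s1 s2 F' E x = F E x"
        using ca cb unfolding Tm_def F'_def \<alpha>_def \<beta>_def by (simp add: algebra_simps)
    qed
  qed
  show ?thesis using std' TT unfolding F'_def by simp
qed

end

lemma std_lin:
  fixes fs :: "nat \<Rightarrow> 'd \<Rightarrow> real \<Rightarrow> complex" and G :: "('w,'d) mgraph"
  assumes fs: "\<And>i. i < n \<Longrightarrow> std_eigenfun G lam (fs i)"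
  shows "std_eigenfun G lam (\<lambda>E x. \<Sum>i<n. c i * fs i E x)"
proof -
  have "\<forall>i. \<exists>t. i < n \<longrightarrow> helmholtz G (of_real lam) (fs i) (snd t) \<and> vertex_continuous G (fs i) (fst t) \<and>
      (\<forall>v\<in>verts G. out_deriv G (snd t) v = 0)"
    using fs unfolding std_eigenfun_def by fastforce
  then obtain T where T: "\<And>i. i < n \<Longrightarrow> helmholtz G (of_real lam) (fs i) (snd (T i)) \<and> vertex_continuous G (fs i) (fst (T i)) \<and>
      (\<forall>v\<in>verts G. out_deriv G (snd (T i)) v = 0)" by metis
  have h: "helmholtz G (of_real lam) (\<lambda>E x. \<Sum>i<n. c i * fs i E x) (\<lambda>E x. \<Sum>i<n. c i * snd (T i) E x)"
    by (rule helm_lin) (use T in auto)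
  have v: "vertex_continuous G (\<lambda>E x. \<Sum>i<n. c i * fs i E x) (\<lambda>v. \<Sum>i<n. c i * fst (T i) v)"
    using T unfolding vertex_continuous_def by auto
  have k: "\<forall>v\<in>verts G. out_deriv G (\<lambda>E x. \<Sum>i<n. c i * snd (T i) E x) v = 0"
    using T by (simp add: out_deriv_lin)
  have s: "(\<forall>e. e \<notin> edges G \<longrightarrow> (\<forall>x. (\<Sum>i<n. c i * fs i e x) = 0)) \<and>
     (\<forall>e\<in>edges G. \<forall>x. x \<notin> {0..elen G e} \<longrightarrow> (\<Sum>i<n. c i * fs i e x) = 0)"
    using fs unfolding std_eigenfun_def by auto
  show ?thesis unfolding std_eigenfun_def using h v k s by blast
qed

lemma helm_part1: "helmholtz (Grec G1 G2 G0 q) z F D \<Longrightarrow> helmholtz G1 z (\<lambda>e. F (Inl e)) (\<lambda>e. D (Inl e))"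
  unfolding helmholtz_def by force
lemma helm_part2: "helmholtz (Grec G1 G2 G0 q) z F D \<Longrightarrow> helmholtz G2 z (\<lambda>e. F (Inr (Inl e))) (\<lambda>e. D (Inr (Inl e)))"
  unfolding helmholtz_def by force

context
  fixes G1 :: "('v1,'e1) mgraph" and G2 :: "('v2,'e2) mgraph" and G0 :: "('v,'e) mgraph"
    and p1 :: 'v1 and p2 :: 'v2 and u :: "complex \<times> complex"
    and s1 :: "'e1 \<Rightarrow> real \<Rightarrow> complex" and s2 :: "'e2 \<Rightarrow> real \<Rightarrow> complex" and lam :: real
  assumes c1: "compact_mgraph G1" and c2: "compact_mgraph G2" and c0: "compact_mgraph G0"
    and unz: "u \<noteq> (0,0)"
    and span1: "\<And>x y. (x,y) \<in> Ldata G1 p1 (of_real lam) \<Longrightarrow> \<exists>c. x = c * fst u \<and> y = c * snd u"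
    and span2: "\<And>x y. (x,y) \<in> Ldata G2 p2 (of_real lam) \<Longrightarrow> \<exists>c. x = c * fst u \<and> y = c * snd u"
    and isoeq: "isol G1 p1 \<longleftrightarrow> isol G2 p2"
    and sig1: "\<exists>\<phi> D. sol G1 p1 (of_real lam) s1 \<phi> D \<and> \<phi> p1 = fst u \<and> out_deriv G1 D p1 = snd u"
    and sig1z: "isol G1 p1 \<Longrightarrow> \<forall>e x. s1 e x = 0"
    and sig2: "\<exists>\<phi> D. sol G2 p2 (of_real lam) s2 \<phi> D \<and> \<phi> p2 = fst u \<and> out_deriv G2 D p2 = snd u"
    and sig2z: "isol G2 p2 \<Longrightarrow> \<forall>e x. s2 e x = 0"
begin


lemma alph_lin:
  assumes h: "\<And>i. i < n \<Longrightarrow> helmholtz (Grec G1 G2 G0 q) z (fs i) (DD i)"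
  shows "alph G1 p1 u (\<lambda>E x. \<Sum>i<n. c i * fs i E x) = (\<Sum>i<n. c i * alph G1 p1 u (fs i))"
    and "bet G2 p2 u (\<lambda>E x. \<Sum>i<n. c i * fs i E x) = (\<Sum>i<n. c i * bet G2 p2 u (fs i))"
proof -
  have "yv G1 p1 (\<lambda>e x. \<Sum>i<n. c i * fs i (Inl e) x) = (\<Sum>i<n. c i * yv G1 p1 (\<lambda>e. fs i (Inl e)))"
    by (rule yv_lin[OF c1]) (rule helm_part1[OF h])
  then show "alph G1 p1 u (\<lambda>E x. \<Sum>i<n. c i * fs i E x) = (\<Sum>i<n. c i * alph G1 p1 u (fs i))"
    unfolding alph_def vv_lin[where f="\<lambda>i e. fs i (Inl e)" and c=c and n=n] by (simp only: coef_lin)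
  have "yv G2 p2 (\<lambda>e x. \<Sum>i<n. c i * fs i (Inr (Inl e)) x) = (\<Sum>i<n. c i * yv G2 p2 (\<lambda>e. fs i (Inr (Inl e))))"
    by (rule yv_lin[OF c2]) (rule helm_part2[OF h])
  then show "bet G2 p2 u (\<lambda>E x. \<Sum>i<n. c i * fs i E x) = (\<Sum>i<n. c i * bet G2 p2 u (fs i))"
    unfolding bet_def vv_lin[where f="\<lambda>i e. fs i (Inr (Inl e))" and c=c and n=n] by (simp only: coef_lin)
qed

lemma T_lin:
  assumes h: "\<And>i. i < n \<Longrightarrow> helmholtz (Grec G1 G2 G0 q) z (fs i) (DD i)"
  shows "Tm G1 G2 p1 p2 u s1 s2 (\<lambda>E x. \<Sum>i<n. c i * fs i E x) = (\<lambda>E x. \<Sum>i<n. c i * Tm G1 G2 p1 p2 u s1 s2 (fs i) E x)"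
proof -
  have A: "alph G1 p1 u (\<lambda>E x. \<Sum>i<n. c i * fs i E x) = (\<Sum>i<n. c i * alph G1 p1 u (fs i))"
    by (rule alph_lin(1)[OF h])
  have B: "bet G2 p2 u (\<lambda>E x. \<Sum>i<n. c i * fs i E x) = (\<Sum>i<n. c i * bet G2 p2 u (fs i))"
    by (rule alph_lin(2)[OF h])
  have hlp: "(\<Sum>i<n. c i * (f i * (S::complex))) = S * (\<Sum>i<n. c i * f i)" for f S
    by (simp add: sum_distrib_left mult.commute mult.left_commute)
  show ?thesis unfolding Tm_def A B
    by (intro ext) (simp add: algebra_simps sum.distrib sum_subtractf hlp)
qed

lemma T_zero: "Tm G1 G2 p1 p2 u s1 s2 ((\<lambda>E x. 0) :: 'e1 + 'e2 + 'e \<Rightarrow> real \<Rightarrow> complex) = (\<lambda>E x. 0)"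
proof -
  have z1: "helmholtz G1 z (\<lambda>e x. 0) (\<lambda>e x. 0)" for z by (simp add: helmholtz_def)
  have z2: "helmholtz G2 z (\<lambda>e x. 0) (\<lambda>e x. 0)" for z by (simp add: helmholtz_def)
  have "yv G1 p1 (\<lambda>e x. 0) = 0" using yv_eq[OF c1 z1] by (simp add: out_deriv_def)
  moreover have "yv G2 p2 (\<lambda>e x. 0) = 0" using yv_eq[OF c2 z2] by (simp add: out_deriv_def)
  moreover have "vv G1 p1 (\<lambda>e x. 0) = 0" "vv G2 p2 (\<lambda>e x. 0) = 0" by (auto simp: vv_def)
  ultimately have "alph G1 p1 u ((\<lambda>E x. 0) :: 'e1 + 'e2 + 'e \<Rightarrow> real \<Rightarrow> complex) = 0"
     "bet G2 p2 u ((\<lambda>E x. 0) :: 'e1 + 'e2 + 'e \<Rightarrow> real \<Rightarrow> complex) = 0"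
    by (auto simp: alph_def bet_def coef_00)
  then show ?thesis unfolding Tm_def by simp
qed

lemma mult_le:
  assumes ab: "a \<noteq> b" and a: "a \<in> verts G0" and b: "b \<in> verts G0"
  shows "multiplicity_std (Grec G1 G2 G0 (qab p1 p2 a b)) lam \<le> multiplicity_std (Grec G1 G2 G0 (qab p1 p2 b a)) lam"
  unfolding multiplicity_std_def
proof (rule Sup_subset_mono, rule subsetI)
  let ?G = "Grec G1 G2 G0 (qab p1 p2 a b)"
  let ?G' = "Grec G1 G2 G0 (qab p1 p2 b a)"
  let ?T = "Tm G1 G2 p1 p2 u s1 s2"
  fix m assume "m \<in> {enat n |n. \<exists>fs. (\<forall>i<n. std_eigenfun ?G lam (fs i)) \<and> lin_indep_family n fs}"
  then obtain n fs where m: "m = enat n" and fs: "\<And>i. i < n \<Longrightarrow> std_eigenfun ?G lam (fs i)"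
    and li: "lin_indep_family n fs" by blast
  have "\<forall>i. \<exists>D. i < n \<longrightarrow> helmholtz ?G (of_real lam) (fs i) D"
    using fs unfolding std_eigenfun_def by blast
  then obtain DD where DD: "\<And>i. i < n \<Longrightarrow> helmholtz ?G (of_real lam) (fs i) (DD i)" by metis
  define gs where "gs i = ?T (fs i)" for i
  have gs: "\<forall>i<n. std_eigenfun ?G' lam (gs i)"
  proof (intro allI impI)
    fix i assume "i < n"
    then show "std_eigenfun ?G' lam (gs i)" using T_main[OF c1 c2 c0 unz span1 span2 isoeq sig1 sig1z sig2 sig2z ab a b fs[OF \<open>i < n\<close>]] unfolding gs_def by blast
  qed
  have "lin_indep_family n gs"
    unfolding lin_indep_family_def
  proof (intro allI impI)
    fix c :: "nat \<Rightarrow> complex" and i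
    assume z: "\<forall>e x. (\<Sum>i<n. c i * gs i e x) = 0" and i: "i < n"
    define F where "F = (\<lambda>E x. \<Sum>i<n. c i * fs i E x)"
    have sF: "std_eigenfun ?G lam F" unfolding F_def by (rule std_lin[OF fs])
    have "?T F = (\<lambda>E x. \<Sum>i<n. c i * gs i E x)"
      unfolding F_def gs_def by (rule T_lin[OF DD])
    also have "\<dots> = (\<lambda>E x. 0)" using z by auto
    finally have "?T F = (\<lambda>E x. 0)" .
    then have "F = ?T (\<lambda>E x. 0)" using T_main[OF c1 c2 c0 unz span1 span2 isoeq sig1 sig1z sig2 sig2z ab a b sF] by simp
    then have "F = (\<lambda>E x. 0)" using T_zero by simp
    then have "\<forall>e x. (\<Sum>i<n. c i * fs i e x) = 0" unfolding F_def by metis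
    then show "c i = 0" using li i unfolding lin_indep_family_def by blast
  qed
  then show "m \<in> {enat n |n. \<exists>fs. (\<forall>i<n. std_eigenfun ?G' lam (fs i)) \<and> lin_indep_family n fs}"
    using m gs by blast
qed

end

lemma span_of:
  assumes H: "compact_mgraph H" and p: "p \<in> verts H" and unz: "u \<noteq> (0,0)"
    and uL: "u \<in> Ldata H p (of_real lam)"
  shows "\<And>x y. (x,y) \<in> Ldata H p (of_real lam) \<Longrightarrow> \<exists>c. x = c * fst u \<and> y = c * snd u"
proof -
  fix x y assume xy: "(x,y) \<in> Ldata H p (of_real lam)"
  have uL': "(fst u, snd u) \<in> Ldata H p (of_real lam)" using uL by simp
  have uu: "fst u * cnj (snd u) = cnj (fst u) * snd u" by (rule iso[OF H p uL' uL'])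
  have vu: "x * cnj (snd u) = cnj (fst u) * y" by (rule iso[OF H p xy uL'])
  have "(fst u, snd u) \<noteq> (0,0)" using unz by simp
  from line_lemma[OF this uu vu] show "\<exists>c. x = c * fst u \<and> y = c * snd u" .
qed

lemma get_sigma:
  assumes H: "compact_mgraph H" and p: "p \<in> verts H" and unz: "u \<noteq> (0,0)"
    and uL: "u \<in> Ldata H p z"
    and span: "\<And>x y. (x,y) \<in> Ldata H p z \<Longrightarrow> \<exists>c. x = c * fst u \<and> y = c * snd u"
  shows "\<exists>s. (\<exists>\<phi> D. sol H p z s \<phi> D \<and> \<phi> p = fst u \<and> out_deriv H D p = snd u) \<and>
             (isol H p \<longrightarrow> (\<forall>e x. s e x = 0))"
proof (cases "isol H p")
  case True
  have sz: "sol H p z (\<lambda>e x. 0) (\<lambda>v. if v = p then w else 0) (\<lambda>e x. 0)" for w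
    using True by (auto simp: sol_def helmholtz_def vertex_continuous_def out_deriv_def isol_def)
  have "(1, 0) \<in> Ldata H p z" unfolding Ldata_def using sz[of 1] out_isol[OF True, of "\<lambda>e x. 0"] by force
  then obtain c where "1 = c * fst u" "0 = c * snd u" using span by blast
  then have u2: "snd u = 0" by auto
  show ?thesis
    using sz[of "fst u"] u2 out_isol[OF True, of "\<lambda>e x. 0"] by force
next
  case False
  obtain f phi D where "sol H p z f phi D" "phi p = fst u" "out_deriv H D p = snd u"
    using uL unfolding Ldata_def by (cases u) auto
  then show ?thesis using False by blast
qed

theorem mainTheorem9:
  fixes \<Gamma>1 :: "('v1, 'e1) mgraph" and \<Gamma>2 :: "('v2, 'e2) mgraph"
    and \<Gamma> :: "('v, 'e) mgraph"
    and p1 :: 'v1 and p2 :: 'v2 and a b :: 'v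
  assumes "compact_mgraph \<Gamma>1" "compact_mgraph \<Gamma>2" "compact_mgraph \<Gamma>"
    and "p1 \<in> verts \<Gamma>1" "p2 \<in> verts \<Gamma>2"
    and "a \<in> verts \<Gamma>" "b \<in> verts \<Gamma>" "a \<noteq> b"
    and "same_M \<Gamma>1 p1 \<Gamma>2 p2"
  shows "isospectral_std
     (identify (identify (dunion \<Gamma>1 (dunion \<Gamma>2 \<Gamma>)) (Inl p1) (Inr (Inr a))) (Inr (Inl p2)) (Inr (Inr b)))
     (identify (identify (dunion \<Gamma>1 (dunion \<Gamma>2 \<Gamma>)) (Inr (Inl p2)) (Inr (Inr a))) (Inl p1) (Inr (Inr b)))"
proof -
  note c1 = assms(1) and c2 = assms(2) and c0 = assms(3) and pp1 = assms(4) and pp2 = assms(5)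
    and a = assms(6) and b = assms(7) and ab = assms(8) and sm = assms(9)
  have isoeq: "isol \<Gamma>1 p1 \<longleftrightarrow> isol \<Gamma>2 p2"
    using isol_transfer[OF c1 c2 pp2 sm] isol_transfer[OF c2 c1 pp1 same_M_sym[OF sm]] by blast
  show ?thesis
    unfolding G_eq1 G_eq2 isospectral_std_def
  proof
    fix lam
    obtain u where unz: "u \<noteq> (0,0)" and u1: "u \<in> Ldata \<Gamma>1 p1 (of_real lam)" and u2: "u \<in> Ldata \<Gamma>2 p2 (of_real lam)"
      using same_line[OF c1 c2 pp1 pp2 sm, of lam] by blast
    note span1 = span_of[OF c1 pp1 unz u1] and span2 = span_of[OF c2 pp2 unz u2]
    obtain s1 where sig1: "\<exists>\<phi> D. sol \<Gamma>1 p1 (of_real lam) s1 \<phi> D \<and> \<phi> p1 = fst u \<and> out_deriv \<Gamma>1 D p1 = snd u"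
      and sig1z: "isol \<Gamma>1 p1 \<longrightarrow> (\<forall>e x. s1 e x = 0)"
      using get_sigma[OF c1 pp1 unz u1 span1] by blast
    obtain s2 where sig2: "\<exists>\<phi> D. sol \<Gamma>2 p2 (of_real lam) s2 \<phi> D \<and> \<phi> p2 = fst u \<and> out_deriv \<Gamma>2 D p2 = snd u"
      and sig2z: "isol \<Gamma>2 p2 \<longrightarrow> (\<forall>e x. s2 e x = 0)"
      using get_sigma[OF c2 pp2 unz u2 span2] by blast
    have le1: "multiplicity_std (Grec \<Gamma>1 \<Gamma>2 \<Gamma> (qab p1 p2 a b)) lam \<le> multiplicity_std (Grec \<Gamma>1 \<Gamma>2 \<Gamma> (qab p1 p2 b a)) lam"
      by (rule mult_le[OF c1 c2 c0 unz span1 span2 isoeq sig1 _ sig2 _ ab a b]) (use sig1z sig2z in auto)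
    have le2: "multiplicity_std (Grec \<Gamma>1 \<Gamma>2 \<Gamma> (qab p1 p2 b a)) lam \<le> multiplicity_std (Grec \<Gamma>1 \<Gamma>2 \<Gamma> (qab p1 p2 a b)) lam"
      by (rule mult_le[OF c1 c2 c0 unz span1 span2 isoeq sig1 _ sig2 _ ab[symmetric] b a]) (use sig1z sig2z in auto)
    show "multiplicity_std (Grec \<Gamma>1 \<Gamma>2 \<Gamma> (qab p1 p2 a b)) lam = multiplicity_std (Grec \<Gamma>1 \<Gamma>2 \<Gamma> (qab p1 p2 b a)) lam"
      using le1 le2 by (rule antisym)
  qed
qed

end
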